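(* Let $S\subset\mathbb{R}^d$ be finite, $\boldsymbol{U}$ an irreducible Markov generator on $S$ (not necessarily reversible), $R\in\mathbb{R}^S$, and $z\in\mathrm{rint\,conv}\,S$. For $Q\in\mathbb{R}^S$ let $\lambda(Q)$ be the principal eigenvalue of $\boldsymbol{U}+\mathrm{diag}(Q)$, and let \[ \Lambda(y):=\max_{\nu\in\mathsf{P}(S):\ \sum_i\nu_i i=y}\big[\langle\nu,R\rangle-I_{\boldsymbol{U}}(\nu)\big],\qquad y\in\mathrm{conv}\,S. \] Then \[ \Lambda(z)=\inf_{\beta\in\mathbb{R}^d}\big[\lambda(R+\beta\cdot\mathrm{id})-\beta\cdot z\big]=\lambda(R+\beta^z\cdot\mathrm{id})-\beta^z\cdot z=\langle\alpha^z,R\rangle-I_{\boldsymbol{U}}(\alpha^z). \] Here $\beta^z\in\mathbb{R}^d$ is the negative slope vector of any tangent plane to $\Lambda$ at $z$ (i.e. any $\beta$ with $\Lambda(y)\le\Lambda(z)-\beta\cdot(y-z)$ for all $y\in\mathrm{conv}\,S$; such $\beta$ exist), and $\alpha^z$ is the ancestral distribution corresponding to the reproduction rate $R+\beta^z\cdot\mathrm{id}$, which is the same for every such $\beta^z$. In particular, $\beta\mapsto\lambda(R+\beta\cdot\mathrm{id})$ is differentiable on $\mathbb{R}^d$ and $\nabla_\beta\lambda(R+\beta\cdot\mathrm{id})|_{\beta=\beta^z}=\langle\alpha^z,\mathrm{id}\rangle=z$.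
   Context: $\mathsf{P}(S)$ is the set of probability vectors on $S$, $\langle\nu,f\rangle=\sum_i\nu_if_i$, $I_{\boldsymbol{U}}(\nu):=\sup_{v\in(0,\infty)^S}[-\sum_i\nu_i(\boldsymbol{U}v)_i/v_i]$, and $\mathrm{rint\,conv}\,S=\{\sum_i\nu_i i:\nu\in\mathsf{P}(S),\nu_i>0\ \forall i\}$. $\mathrm{id}$ is the map $i\mapsto i$ on $S$, so $R+\beta\cdot\mathrm{id}$ is the vector $(R_i+\beta\cdot i)_{i\in S}$ and $\langle\alpha,\mathrm{id}\rangle=\sum_i\alpha_i i$. The ancestral distribution for a reproduction rate $Q$ is $\alpha_i=\pi_ih_i$, where $\pi,h$ are positive left and right eigenvectors of $\boldsymbol{U}+\mathrm{diag}(Q)$ for its principal eigenvalue, normalized by $\sum_i\pi_i=1=\sum_i\pi_ih_i$. *)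

theory Defs
  imports "HOL-Analysis.Analysis"
begin

text \<open>States are points of a finite set S of real^'d; vectors and matrices on S are
  functions on the whole type whose values outside S are irrelevant.\<close>

definition markov_generator :: "'a set \<Rightarrow> ('a \<Rightarrow> 'a \<Rightarrow> real) \<Rightarrow> bool" where
  "markov_generator S U \<longleftrightarrow>
     (\<forall>i\<in>S. \<forall>j\<in>S. i \<noteq> j \<longrightarrow> U i j \<ge> 0) \<and> (\<forall>i\<in>S. (\<Sum>j\<in>S. U i j) = 0)"

definition irreducible_gen :: "'a set \<Rightarrow> ('a \<Rightarrow> 'a \<Rightarrow> real) \<Rightarrow> bool" where
  "irreducible_gen S U \<longleftrightarrow>
     (\<forall>i\<in>S. \<forall>j\<in>S. (i, j) \<in> {(a, b). a \<in> S \<and> b \<in> S \<and> a \<noteq> b \<and> U a b > 0}\<^sup>*)"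

definition prob_vecs :: "'a set \<Rightarrow> ('a \<Rightarrow> real) set" where
  "prob_vecs S = {\<nu>. (\<forall>i\<in>S. \<nu> i \<ge> 0) \<and> (\<forall>i. i \<notin> S \<longrightarrow> \<nu> i = 0) \<and> sum \<nu> S = 1}"

definition rint_conv :: "('b::real_vector) set \<Rightarrow> 'b set" where
  "rint_conv S = {(\<Sum>i\<in>S. \<nu> i *\<^sub>R i) | \<nu>. \<nu> \<in> prob_vecs S \<and> (\<forall>i\<in>S. \<nu> i > 0)}"

definition rate_I :: "'a set \<Rightarrow> ('a \<Rightarrow> 'a \<Rightarrow> real) \<Rightarrow> ('a \<Rightarrow> real) \<Rightarrow> real" where
  "rate_I S U \<nu> = (SUP v \<in> {v. \<forall>i\<in>S. v i > 0}.
      - (\<Sum>i\<in>S. \<nu> i * (\<Sum>j\<in>S. U i j * v j) / v i))"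

definition plus_diag :: "('a \<Rightarrow> 'a \<Rightarrow> real) \<Rightarrow> ('a \<Rightarrow> real) \<Rightarrow> 'a \<Rightarrow> 'a \<Rightarrow> real" where
  "plus_diag U Q = (\<lambda>i j. U i j + (if i = j then Q i else 0))"

definition is_eigenvalue_on :: "'a set \<Rightarrow> ('a \<Rightarrow> 'a \<Rightarrow> real) \<Rightarrow> complex \<Rightarrow> bool" where
  "is_eigenvalue_on S M \<mu> \<longleftrightarrow> (\<exists>v :: 'a \<Rightarrow> complex. (\<exists>i\<in>S. v i \<noteq> 0) \<and>
      (\<forall>i\<in>S. (\<Sum>j\<in>S. complex_of_real (M i j) * v j) = \<mu> * v i))"

definition principal_eig :: "'a set \<Rightarrow> ('a \<Rightarrow> 'a \<Rightarrow> real) \<Rightarrow> real" where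
  "principal_eig S M = Max (Re ` {\<mu>. is_eigenvalue_on S M \<mu>})"

definition lam :: "'a set \<Rightarrow> ('a \<Rightarrow> 'a \<Rightarrow> real) \<Rightarrow> ('a \<Rightarrow> real) \<Rightarrow> real" where
  "lam S U Q = principal_eig S (plus_diag U Q)"

definition ancestral :: "'a set \<Rightarrow> ('a \<Rightarrow> 'a \<Rightarrow> real) \<Rightarrow> ('a \<Rightarrow> real) \<Rightarrow> ('a \<Rightarrow> real)" where
  "ancestral S U Q = (THE \<alpha>. \<exists>\<pi> h. (\<forall>i\<in>S. \<pi> i > 0 \<and> h i > 0) \<and>
      (\<forall>j\<in>S. (\<Sum>i\<in>S. \<pi> i * plus_diag U Q i j) = lam S U Q * \<pi> j) \<and>
      (\<forall>i\<in>S. (\<Sum>j\<in>S. plus_diag U Q i j * h j) = lam S U Q * h i) \<and>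
      sum \<pi> S = 1 \<and> (\<Sum>i\<in>S. \<pi> i * h i) = 1 \<and>
      \<alpha> = (\<lambda>i. if i \<in> S then \<pi> i * h i else 0))"

definition bigLambda :: "('b::real_vector) set \<Rightarrow> ('b \<Rightarrow> 'b \<Rightarrow> real) \<Rightarrow> ('b \<Rightarrow> real) \<Rightarrow> 'b \<Rightarrow> real" where
  "bigLambda S U R y = Sup {(\<Sum>i\<in>S. \<nu> i * R i) - rate_I S U \<nu> | \<nu>.
       \<nu> \<in> prob_vecs S \<and> (\<Sum>i\<in>S. \<nu> i *\<^sub>R i) = y}"

definition tangent_slope :: "('b::real_inner) set \<Rightarrow> ('b \<Rightarrow> 'b \<Rightarrow> real) \<Rightarrow> ('b \<Rightarrow> real) \<Rightarrow> 'b \<Rightarrow> 'b \<Rightarrow> bool" where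
  "tangent_slope S U R z \<beta> \<longleftrightarrow>
     (\<forall>y\<in>convex hull S. bigLambda S U R y \<le> bigLambda S U R z - \<beta> \<bullet> (y - z))"

end

theory Submission
  imports Defs "Jordan_Normal_Form.Char_Poly"
begin

no_notation scalar_prod (infix "\<bullet>" 70)

lemma finite_eigs:
  assumes fin: "finite S"
  shows "finite {\<mu>. is_eigenvalue_on S M \<mu>}"
proof -
  define n where "n = card S"
  obtain f where bij: "bij_betw f {0..<n} S" using ex_bij_betw_nat_finite[OF fin] n_def by blast
  define A where "A = mat n n (\<lambda>(a,b). complex_of_real (M (f a) (f b)))"
  have A: "A \<in> carrier_mat n n" unfolding A_def by simp
  have "{\<mu>. is_eigenvalue_on S M \<mu>} \<subseteq> {\<mu>. poly (char_poly A) \<mu> = 0}"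
  proof
    fix \<mu> assume "\<mu> \<in> {\<mu>. is_eigenvalue_on S M \<mu>}"
    then obtain v where v0: "\<exists>i\<in>S. v i \<noteq> 0" and ev: "\<forall>i\<in>S. (\<Sum>j\<in>S. complex_of_real (M i j) * v j) = \<mu> * v i"
      unfolding is_eigenvalue_on_def by auto
    define w where "w = vec n (\<lambda>a. v (f a))"
    have wc: "w \<in> carrier_vec n" unfolding w_def by simp
    from v0 obtain i where i: "i \<in> S" "v i \<noteq> 0" by auto
    then obtain a where a: "a < n" "f a = i" using bij unfolding bij_betw_def by auto
    have "w \<noteq> 0\<^sub>v n"
    proof
      assume "w = 0\<^sub>v n"
      hence "w $ a = 0" using a by simp
      thus False using a i unfolding w_def by simp
    qed
    moreover have "A *\<^sub>v w = \<mu> \<cdot>\<^sub>v w"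
    proof (rule eq_vecI)
      fix b assume "b < dim_vec (\<mu> \<cdot>\<^sub>v w)"
      hence b: "b < n" unfolding w_def by simp
      have "(A *\<^sub>v w) $ b = (\<Sum>c\<in>{0..<n}. complex_of_real (M (f b) (f c)) * v (f c))"
        using b unfolding A_def w_def by (simp add: scalar_prod_def row_def)
      also have "\<dots> = (\<Sum>j\<in>S. complex_of_real (M (f b) j) * v j)"
        using sum.reindex_bij_betw[OF bij, of "\<lambda>j. complex_of_real (M (f b) j) * v j"] by simp
      also have "\<dots> = \<mu> * v (f b)" using ev bij b unfolding bij_betw_def by auto
      finally show "(A *\<^sub>v w) $ b = (\<mu> \<cdot>\<^sub>v w) $ b" using b unfolding w_def by simp
    qed (simp add: A_def w_def)
    ultimately have "eigenvalue A \<mu>" unfolding eigenvalue_def eigenvector_def using wc A by auto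
    thus "\<mu> \<in> {\<mu>. poly (char_poly A) \<mu> = 0}" using eigenvalue_root_char_poly[OF A] by simp
  qed
  moreover have "char_poly A \<noteq> 0" using degree_monic_char_poly[OF A] by auto
  ultimately show ?thesis using poly_roots_finite finite_subset by blast
qed

definition edg :: "'a set \<Rightarrow> ('a \<Rightarrow> 'a \<Rightarrow> real) \<Rightarrow> ('a \<times> 'a) set" where
  "edg S M = {(a, b). a \<in> S \<and> b \<in> S \<and> a \<noteq> b \<and> M a b > 0}"

lemma finite_BW:
  fixes f :: "nat \<Rightarrow> 'a \<Rightarrow> real"
  assumes "finite S" and "\<And>n i. i \<in> S \<Longrightarrow> \<bar>f n i\<bar> \<le> B i"
  shows "\<exists>r L. strict_mono r \<and> (\<forall>i\<in>S. (\<lambda>n. f (r n) i) \<longlonglongrightarrow> L i)"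
  using assms
proof (induction S rule: finite_induct)
  case empty
  show ?case by (rule exI[of _ id], auto simp: strict_mono_def)
next
  case (insert x F)
  then obtain r L where r: "strict_mono r" and L: "\<forall>i\<in>F. (\<lambda>n. f (r n) i) \<longlonglongrightarrow> L i" by force
  have "bounded (range (\<lambda>n. f (r n) x))"
    unfolding bounded_iff using insert.prems by (intro exI[of _ "B x"]) auto
  then obtain l r' where r': "strict_mono r'" and l: "((\<lambda>n. f (r n) x) \<circ> r') \<longlonglongrightarrow> l"
    using bounded_imp_convergent_subsequence by blast
  show ?case
  proof (intro exI conjI ballI)
    show "strict_mono (r \<circ> r')" using r r' by (simp add: strict_mono_o)
    fix i assume "i \<in> insert x F"
    show "(\<lambda>n. f ((r \<circ> r') n) i) \<longlonglongrightarrow> (L(x := l)) i"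
    proof (cases "i = x")
      case True thus ?thesis using l by (simp add: o_def)
    next
      case False
      hence "i \<in> F" using \<open>i \<in> insert x F\<close> by auto
      hence "((\<lambda>n. f (r n) i) \<circ> r') \<longlonglongrightarrow> L i" using L r' LIMSEQ_subseq_LIMSEQ by blast
      thus ?thesis using False by (simp add: o_def)
    qed
  qed
qed

locale pf =
  fixes S :: "'a set" and M :: "'a \<Rightarrow> 'a \<Rightarrow> real"
  assumes fin: "finite S" and ne: "S \<noteq> {}"
    and offd: "\<And>i j. i \<in> S \<Longrightarrow> j \<in> S \<Longrightarrow> i \<noteq> j \<Longrightarrow> M i j \<ge> 0"
    and irr: "\<And>i j. i \<in> S \<Longrightarrow> j \<in> S \<Longrightarrow> (i, j) \<in> (edg S M)\<^sup>*"
begin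

lemma sum_split:
  assumes "a \<in> S"
  shows "(\<Sum>j\<in>S. g j) = g a + (\<Sum>j\<in>S - {a}. g j)"
  using sum.remove[OF fin assms] .

lemma offd_mult: "i \<in> S \<Longrightarrow> j \<in> S \<Longrightarrow> i \<noteq> j \<Longrightarrow> v j \<ge> 0 \<Longrightarrow> M i j * v j \<ge> 0"
  using offd[of i j] by simp

lemma zero_prop:
  assumes x0: "\<forall>i\<in>S. x i \<ge> 0" and ev: "\<forall>i\<in>S. (\<Sum>j\<in>S. M i j * x j) = \<mu> * x i"
    and k: "k \<in> S" "x k = 0" and j: "j \<in> S"
  shows "x j = 0"
proof -
  have stp: "x b = 0" if ab: "(a, b) \<in> edg S M" and xa: "x a = 0" for a b
  proof -
    from ab have a: "a \<in> S" and b: "b \<in> S" and abn: "a \<noteq> b" and Mab: "M a b > 0"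
      unfolding edg_def by auto
    have "(\<Sum>j\<in>S. M a j * x j) = 0" using ev a xa by auto
    hence "(\<Sum>j\<in>S - {a}. M a j * x j) = 0" using sum_split[OF a, of "\<lambda>j. M a j * x j"] xa by simp
    moreover have "\<forall>j\<in>S - {a}. M a j * x j \<ge> 0" using offd a x0 by (auto intro!: mult_nonneg_nonneg)
    ultimately have "M a b * x b = 0" using sum_nonneg_eq_0_iff[of "S - {a}" "\<lambda>j. M a j * x j"] fin b abn
      by auto
    thus ?thesis using Mab by simp
  qed
  have "(k, j) \<in> (edg S M)\<^sup>*" using irr k j by auto
  thus ?thesis
  proof (induction rule: rtrancl_induct)
    case base thus ?case using k by simp
  next
    case (step y z) thus ?case using stp by blast
  qed
qed

lemma crossing:
  assumes "T \<subseteq> S" "T \<noteq> {}" "T \<noteq> S"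
  shows "\<exists>a b. (a, b) \<in> edg S M \<and> a \<notin> T \<and> b \<in> T"
proof -
  obtain a0 where a0: "a0 \<in> S" "a0 \<notin> T" using assms by auto
  obtain b0 where b0: "b0 \<in> T" using assms by auto
  have "(a0, b0) \<in> (edg S M)\<^sup>*" using irr a0 b0 assms by auto
  thus ?thesis using b0
  proof (induction rule: rtrancl_induct)
    case base thus ?case using a0 by simp
  next
    case (step y z) thus ?case by blast
  qed
qed

lemma path_bound:
  assumes "(i, j) \<in> (edg S M)\<^sup>*"
  shows "\<exists>C>0. \<forall>v r. (\<forall>l\<in>S. v l > 0) \<and> r \<le> rmax \<and> (\<forall>l\<in>S. (\<Sum>j\<in>S. M l j * v j) \<le> r * v l)
            \<longrightarrow> v j \<le> C * v i"
  using assms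
proof (induction rule: rtrancl_induct)
  case base show ?case by (intro exI[of _ 1]) auto
next
  case (step a b)
  then obtain C where C: "C > 0" and HC: "\<forall>v r. (\<forall>l\<in>S. v l > 0) \<and> r \<le> rmax \<and> (\<forall>l\<in>S. (\<Sum>j\<in>S. M l j * v j) \<le> r * v l)
            \<longrightarrow> v a \<le> C * v i" by blast
  from step(2) have a: "a \<in> S" and b: "b \<in> S" and abn: "a \<noteq> b" and Mab: "M a b > 0"
    unfolding edg_def by auto
  define K where "K = max 1 ((rmax - M a a) / M a b)"
  show ?case
  proof (intro exI[of _ "K * C"] conjI allI impI)
    show "K * C > 0" using C unfolding K_def by (simp add: zero_less_mult_iff)
    fix v r assume H: "(\<forall>l\<in>S. v l > 0) \<and> r \<le> rmax \<and> (\<forall>l\<in>S. (\<Sum>j\<in>S. M l j * v j) \<le> r * v l)"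
    have va: "v a \<le> C * v i" using HC H by blast
    have nn: "\<forall>j\<in>S - {a}. 0 \<le> M a j * v j"
    proof
      fix j assume j: "j \<in> S - {a}"
      have "M a j \<ge> 0" using offd[of a j] a j by auto
      moreover have "v j > 0" using H j by auto
      ultimately show "0 \<le> M a j * v j" by simp
    qed
    have "M a b * v b \<le> (\<Sum>j\<in>S - {a}. M a j * v j)"
      by (rule member_le_sum) (use nn fin b abn in auto)
    also have "\<dots> = (\<Sum>j\<in>S. M a j * v j) - M a a * v a" using sum_split[OF a, of "\<lambda>j. M a j * v j"] by simp
    also have "\<dots> \<le> r * v a - M a a * v a" using H a by auto
    also have "\<dots> \<le> (rmax - M a a) * v a" using H a by (simp add: algebra_simps mult_right_mono)
    finally have "M a b * v b \<le> (rmax - M a a) * v a" .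
    hence "v b \<le> ((rmax - M a a) / M a b) * v a" using Mab by (simp add: field_simps)
    also have "\<dots> \<le> K * v a" unfolding K_def using H a by (intro mult_right_mono) auto
    also have "\<dots> \<le> K * (C * v i)" using va unfolding K_def by (intro mult_left_mono) auto
    finally show "v b \<le> K * C * v i" by (simp add: mult.assoc)
  qed
qed


lemma Rs_step:
  fixes \<rho> c :: real and A w
  assumes A_def: "A = (\<lambda>i j. M i j + (if i = j then c else 0))"
  assumes c: "\<And>i. i \<in> S \<Longrightarrow> M i i + c > 0"
    and vpos: "\<forall>i\<in>S. v i > 0" and vle: "\<forall>i\<in>S. (\<Sum>j\<in>S. M i j * v j) \<le> \<rho> * v i"
  assumes w_def: "w = (\<lambda>i. \<Sum>j\<in>S. A i j * v j)"
  shows "\<forall>i\<in>S. w i > 0" "\<forall>i\<in>S. (\<Sum>j\<in>S. M i j * w j) \<le> \<rho> * w i"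
    "\<And>i. i \<in> S \<Longrightarrow> (\<exists>j\<in>S. A i j > 0 \<and> (\<Sum>l\<in>S. M j l * v l) < \<rho> * v j) \<Longrightarrow> (\<Sum>j\<in>S. M i j * w j) < \<rho> * w i"
    "\<And>i j. i \<in> S \<Longrightarrow> j \<in> S \<Longrightarrow> A i j \<ge> 0"
proof -
  have Aform: "(\<Sum>j\<in>S. A i j * x j) = (\<Sum>j\<in>S. M i j * x j) + c * x i" if "i \<in> S" for i x
  proof -
    have "(\<Sum>j\<in>S. A i j * x j) = (\<Sum>j\<in>S. M i j * x j) + (\<Sum>j\<in>S. (if i = j then c else 0) * x j)"
      unfolding A_def by (simp add: algebra_simps sum.distrib)
    also have "(\<Sum>j\<in>S. (if i = j then c else 0) * x j) = (\<Sum>j\<in>S. (if i = j then c * x j else 0))"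
      by (rule sum.cong) auto
    also have "\<dots> = c * x i" using that fin by (simp add: sum.delta)
    finally show ?thesis .
  qed
  show Anonneg: "\<And>i j. i \<in> S \<Longrightarrow> j \<in> S \<Longrightarrow> A i j \<ge> 0"
    unfolding A_def using offd c by (auto simp: less_imp_le)
  have wle: "w j \<le> (\<rho> + c) * v j" if "j \<in> S" for j
    using Aform[OF that, of v] vle that unfolding w_def by (simp add: algebra_simps)
  show "\<forall>i\<in>S. w i > 0"
  proof
    fix i assume i: "i \<in> S"
    have nn: "\<forall>j\<in>S. 0 \<le> A i j * v j" using Anonneg i vpos by (simp add: less_imp_le)
    have "A i i * v i \<le> w i" unfolding w_def by (rule member_le_sum) (use nn fin i in auto)
    moreover have "A i i * v i > 0" using c[OF i] vpos i unfolding A_def by simp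
    ultimately show "w i > 0" by simp
  qed
  have key: "(\<Sum>j\<in>S. A i j * w j) \<le> (\<rho> + c) * w i" if i: "i \<in> S" for i
  proof -
    have "(\<Sum>j\<in>S. A i j * w j) \<le> (\<Sum>j\<in>S. A i j * ((\<rho> + c) * v j))"
      by (rule sum_mono) (use Anonneg i wle in \<open>auto intro: mult_left_mono\<close>)
    also have "\<dots> = (\<rho> + c) * w i" unfolding w_def by (simp add: sum_distrib_left algebra_simps)
    finally show ?thesis .
  qed
  show "\<forall>i\<in>S. (\<Sum>j\<in>S. M i j * w j) \<le> \<rho> * w i"
    using key Aform by (auto simp: algebra_simps)
  fix i assume i: "i \<in> S" and ex: "\<exists>j\<in>S. A i j > 0 \<and> (\<Sum>l\<in>S. M j l * v l) < \<rho> * v j"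
  have "(\<Sum>j\<in>S. A i j * w j) < (\<Sum>j\<in>S. A i j * ((\<rho> + c) * v j))"
  proof (rule sum_strict_mono_ex1[OF fin])
    show "\<forall>x\<in>S. A i x * w x \<le> A i x * ((\<rho> + c) * v x)"
      using Anonneg i wle by (auto intro: mult_left_mono)
    from ex obtain j where j: "j \<in> S" "A i j > 0" "(\<Sum>l\<in>S. M j l * v l) < \<rho> * v j" by auto
    have "w j < (\<rho> + c) * v j" using Aform[OF j(1), of v] j(3) unfolding w_def by (simp add: algebra_simps)
    thus "\<exists>a\<in>S. A i a * w a < A i a * ((\<rho> + c) * v a)" using j by (intro bexI[of _ j]) auto
  qed
  also have "\<dots> = (\<rho> + c) * w i" unfolding w_def by (simp add: sum_distrib_left algebra_simps)
  finally show "(\<Sum>j\<in>S. M i j * w j) < \<rho> * w i" using Aform[OF i, of w] by (simp add: algebra_simps)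
qed

lemma pf_exists: "\<exists>\<rho> h. (\<forall>i\<in>S. h i > 0) \<and> (\<forall>i\<in>S. (\<Sum>j\<in>S. M i j * h j) = \<rho> * h i)"
proof -
  define Rs where "Rs = {r. \<exists>v. (\<forall>i\<in>S. v i > 0) \<and> (\<forall>i\<in>S. (\<Sum>j\<in>S. M i j * v j) \<le> r * v i)}"
  define \<rho> where "\<rho> = Inf Rs"
  obtain i0 where i0: "i0 \<in> S" using ne by auto
  have lowb: "M i0 i0 \<le> r" if "r \<in> Rs" for r
  proof -
    from that obtain v where vp: "\<forall>i\<in>S. v i > 0" and vl: "\<forall>i\<in>S. (\<Sum>j\<in>S. M i j * v j) \<le> r * v i"
      unfolding Rs_def by auto
    have nn: "\<forall>j\<in>S - {i0}. 0 \<le> M i0 j * v j" using i0 vp by (auto intro!: offd_mult simp: less_imp_le)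
    have "M i0 i0 * v i0 \<le> (\<Sum>j\<in>S. M i0 j * v j)"
      using sum_split[OF i0, of "\<lambda>j. M i0 j * v j"] sum_nonneg[of "S - {i0}" "\<lambda>j. M i0 j * v j"] nn by simp
    also have "\<dots> \<le> r * v i0" using vl i0 by auto
    finally show ?thesis using vp i0 by simp
  qed
  have bdd: "bdd_below Rs" using lowb by (auto simp: bdd_below_def)
  have Rne: "Rs \<noteq> {}"
  proof -
    have "(\<Sum>i\<in>S. \<Sum>j\<in>S. \<bar>M i j\<bar>) \<in> Rs" unfolding Rs_def
    proof (intro CollectI exI[of _ "\<lambda>_. 1"] conjI ballI)
      fix i assume i: "i \<in> S"
      have "(\<Sum>j\<in>S. M i j * 1) \<le> (\<Sum>j\<in>S. \<bar>M i j\<bar>)" by (rule sum_mono) auto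
      also have "\<dots> \<le> (\<Sum>i\<in>S. \<Sum>j\<in>S. \<bar>M i j\<bar>)"
        by (rule member_le_sum[of i S "\<lambda>i. \<Sum>j\<in>S. \<bar>M i j\<bar>"]) (use i fin in \<open>auto intro: sum_nonneg\<close>)
      finally show "(\<Sum>j\<in>S. M i j * 1) \<le> (\<Sum>i\<in>S. \<Sum>j\<in>S. \<bar>M i j\<bar>) * 1" by simp
    qed simp
    thus ?thesis by auto
  qed
  have rho_le: "\<rho> \<le> r" if "r \<in> Rs" for r unfolding \<rho>_def using cInf_lower[OF that bdd] .
  have "\<forall>n. \<exists>r v. (\<forall>i\<in>S. v i > 0) \<and> (\<forall>i\<in>S. (\<Sum>j\<in>S. M i j * v j) \<le> r * v i) \<and> \<rho> \<le> r \<and> r < \<rho> + inverse (real (Suc n))"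
  proof
    fix n
    have "Inf Rs < \<rho> + inverse (real (Suc n))" unfolding \<rho>_def by simp
    then obtain r where r: "r \<in> Rs" "r < \<rho> + inverse (real (Suc n))" using cInf_less_iff[OF Rne bdd] by auto
    thus "\<exists>r v. (\<forall>i\<in>S. v i > 0) \<and> (\<forall>i\<in>S. (\<Sum>j\<in>S. M i j * v j) \<le> r * v i) \<and> \<rho> \<le> r \<and> r < \<rho> + inverse (real (Suc n))"
      using rho_le[OF r(1)] unfolding Rs_def by auto
  qed
  then obtain rn vn where rv: "\<And>n. (\<forall>i\<in>S. vn n i > 0) \<and> (\<forall>i\<in>S. (\<Sum>j\<in>S. M i j * vn n j) \<le> rn n * vn n i) \<and> \<rho> \<le> rn n \<and> rn n < \<rho> + inverse (real (Suc n))"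
    by metis
  define wn where "wn = (\<lambda>n i. vn n i / vn n i0)"
  have wpos: "\<forall>i\<in>S. wn n i > 0" for n using rv[of n] i0 unfolding wn_def by auto
  have wle: "\<forall>i\<in>S. (\<Sum>j\<in>S. M i j * wn n j) \<le> rn n * wn n i" for n
  proof
    fix i assume i: "i \<in> S"
    have p: "vn n i0 > 0" using rv[of n] i0 by auto
    have "(\<Sum>j\<in>S. M i j * wn n j) = (\<Sum>j\<in>S. M i j * vn n j) / vn n i0"
      unfolding wn_def by (simp add: sum_divide_distrib)
    also have "\<dots> \<le> rn n * vn n i / vn n i0" using rv[of n] i p by (simp add: divide_right_mono)
    finally show "(\<Sum>j\<in>S. M i j * wn n j) \<le> rn n * wn n i" unfolding wn_def by simp
  qed
  have w0: "wn n i0 = 1" for n using rv[of n] i0 unfolding wn_def by auto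
  have rmax: "rn n \<le> \<rho> + 1" for n
  proof -
    have "inverse (real (Suc n)) \<le> 1" by (simp add: inverse_le_1_iff)
    thus ?thesis using rv[of n] by linarith
  qed
  have "\<forall>j\<in>S. \<exists>C. C > 0 \<and> (\<forall>n. wn n j \<le> C)"
  proof
    fix j assume j: "j \<in> S"
    obtain C where C: "C > 0" "\<forall>v r. (\<forall>l\<in>S. v l > 0) \<and> r \<le> \<rho> + 1 \<and> (\<forall>l\<in>S. (\<Sum>j\<in>S. M l j * v j) \<le> r * v l)
            \<longrightarrow> v j \<le> C * v i0" using path_bound[OF irr[OF i0 j], of "\<rho> + 1"] by blast
    have "wn n j \<le> C" for n using C(2)[rule_format, of "wn n" "rn n"] wpos wle rmax w0 by auto
    thus "\<exists>C. C > 0 \<and> (\<forall>n. wn n j \<le> C)" using C by auto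
  qed
  then obtain C1 where C1: "\<forall>j\<in>S. C1 j > 0 \<and> (\<forall>n. wn n j \<le> C1 j)" by metis
  have "\<forall>j\<in>S. \<exists>C. C > 0 \<and> (\<forall>n. 1 \<le> C * wn n j)"
  proof
    fix j assume j: "j \<in> S"
    obtain C where C: "C > 0" "\<forall>v r. (\<forall>l\<in>S. v l > 0) \<and> r \<le> \<rho> + 1 \<and> (\<forall>l\<in>S. (\<Sum>j\<in>S. M l j * v j) \<le> r * v l)
            \<longrightarrow> v i0 \<le> C * v j" using path_bound[OF irr[OF j i0], of "\<rho> + 1"] by blast
    have "1 \<le> C * wn n j" for n using C(2)[rule_format, of "wn n" "rn n"] wpos wle rmax w0 by auto
    thus "\<exists>C. C > 0 \<and> (\<forall>n. 1 \<le> C * wn n j)" using C by auto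
  qed
  then obtain C2 where C2: "\<forall>j\<in>S. C2 j > 0 \<and> (\<forall>n. 1 \<le> C2 j * wn n j)" by metis
  have "\<bar>wn n i\<bar> \<le> C1 i" if "i \<in> S" for n i using C1 wpos[of n] that by (simp add: less_imp_le)
  then obtain r L where r: "strict_mono r" and L: "\<forall>i\<in>S. (\<lambda>n. wn (r n) i) \<longlonglongrightarrow> L i"
    using finite_BW[OF fin, of wn C1] by blast
  have rn_lim: "(\<lambda>n. rn n) \<longlonglongrightarrow> \<rho>"
  proof (rule tendsto_sandwich[of "\<lambda>n. \<rho>" _ _ "\<lambda>n. \<rho> + inverse (real (Suc n))"])
    show "\<forall>\<^sub>F n in sequentially. \<rho> \<le> rn n" using rv by auto
    show "\<forall>\<^sub>F n in sequentially. rn n \<le> \<rho> + inverse (real (Suc n))" using rv by (auto simp: less_imp_le)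
    show "(\<lambda>n. \<rho> + inverse (real (Suc n))) \<longlonglongrightarrow> \<rho>"
      using tendsto_add[OF tendsto_const LIMSEQ_inverse_real_of_nat] by simp
  qed simp
  have rn_lim': "(\<lambda>n. rn (r n)) \<longlonglongrightarrow> \<rho>" using LIMSEQ_subseq_LIMSEQ[OF rn_lim r] by (simp add: o_def)
  have Lpos: "L j > 0" if j: "j \<in> S" for j
  proof -
    have "1 / C2 j \<le> L j"
    proof (rule LIMSEQ_le_const[OF L[rule_format, OF j]])
      show "\<exists>N. \<forall>n\<ge>N. 1 / C2 j \<le> wn (r n) j" using C2 j by (auto simp: field_simps)
    qed
    moreover have "1 / C2 j > 0" using C2 j by auto
    ultimately show ?thesis by linarith
  qed
  have Lle: "(\<Sum>j\<in>S. M i j * L j) \<le> \<rho> * L i" if i: "i \<in> S" for i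
  proof (rule LIMSEQ_le)
    show "(\<lambda>n. \<Sum>j\<in>S. M i j * wn (r n) j) \<longlonglongrightarrow> (\<Sum>j\<in>S. M i j * L j)"
      by (intro tendsto_intros) (use L in auto)
    show "(\<lambda>n. rn (r n) * wn (r n) i) \<longlonglongrightarrow> \<rho> * L i"
      by (intro tendsto_intros rn_lim') (use L i in auto)
    show "\<exists>N. \<forall>n\<ge>N. (\<Sum>j\<in>S. M i j * wn (r n) j) \<le> rn (r n) * wn (r n) i" using wle i by auto
  qed
  show ?thesis
  proof (rule exI[of _ \<rho>], rule exI[of _ L], intro conjI ballI)
    fix i assume "i \<in> S" thus "L i > 0" using Lpos by auto
  next
    fix i assume i: "i \<in> S"
    show "(\<Sum>j\<in>S. M i j * L j) = \<rho> * L i"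
    proof (rule ccontr)
      assume neq: "(\<Sum>j\<in>S. M i j * L j) \<noteq> \<rho> * L i"
      define c where "c = 1 + (\<Sum>i\<in>S. \<bar>M i i\<bar>)"
      have cpos: "M l l + c > 0" if "l \<in> S" for l
      proof -
        have "\<bar>M l l\<bar> \<le> (\<Sum>i\<in>S. \<bar>M i i\<bar>)" by (rule member_le_sum) (use that fin in auto)
        thus ?thesis unfolding c_def by linarith
      qed
      define A where "A = (\<lambda>i j. M i j + (if i = j then c else (0::real)))"
      define T where "T = (\<lambda>v. {i\<in>S. (\<Sum>j\<in>S. M i j * v j) < \<rho> * v i})"
      have iter: "\<exists>v. (\<forall>i\<in>S. v i > 0) \<and> (\<forall>i\<in>S. (\<Sum>j\<in>S. M i j * v j) \<le> \<rho> * v i) \<and> (T v = S \<or> n < card (T v))" for n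
      proof (induction n)
        case 0
        have "i \<in> T L" unfolding T_def using i neq Lle[OF i] by auto
        hence "0 < card (T L)" using fin unfolding T_def by (auto simp: card_gt_0_iff)
        thus ?case using Lpos Lle by blast
      next
        case (Suc n)
        then obtain v where vp: "\<forall>i\<in>S. v i > 0" and vl: "\<forall>i\<in>S. (\<Sum>j\<in>S. M i j * v j) \<le> \<rho> * v i"
          and vc: "T v = S \<or> n < card (T v)" by blast
        show ?case
        proof (cases "T v = S")
          case True thus ?thesis using vp vl by blast
        next
          case False
          hence cn: "n < card (T v)" using vc by auto
          define w where "w = (\<lambda>i. \<Sum>j\<in>S. A i j * v j)"
          note st = Rs_step[OF A_def cpos vp vl w_def]
          have sub: "T v \<subseteq> T w"
          proof
            fix a assume a: "a \<in> T v"
            hence "a \<in> S" unfolding T_def by auto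
            moreover have "A a a > 0" using cpos \<open>a \<in> S\<close> unfolding A_def by auto
            ultimately show "a \<in> T w" using st(3)[of a] a unfolding T_def by auto
          qed
          have TS: "T v \<subseteq> S" "T w \<subseteq> S" unfolding T_def by auto
          have "T v \<noteq> {}" using cn by auto
          then obtain a b where ab: "(a, b) \<in> edg S M" "a \<notin> T v" "b \<in> T v"
            using crossing[OF TS(1) _ False] by blast
          have "a \<in> T w"
          proof -
            from ab(1) have a: "a \<in> S" and b: "b \<in> S" and "a \<noteq> b" "M a b > 0" unfolding edg_def by auto
            hence "A a b > 0" unfolding A_def by auto
            thus ?thesis using st(3)[of a] a b ab(3) unfolding T_def by auto
          qed
          hence "T v \<subset> T w" using sub ab(2) by auto
          hence "card (T v) < card (T w)" using psubset_card_mono[OF finite_subset[OF TS(2) fin]] by auto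
          thus ?thesis using st(1,2) cn by (intro exI[of _ w]) auto
        qed
      qed
      obtain v where vp: "\<forall>i\<in>S. v i > 0" and vl: "\<forall>i\<in>S. (\<Sum>j\<in>S. M i j * v j) \<le> \<rho> * v i"
          and vc: "T v = S \<or> card S < card (T v)" using iter[of "card S"] by blast
      have "card (T v) \<le> card S" using fin unfolding T_def by (intro card_mono) auto
      hence TvS: "T v = S" using vc by auto
      define r' where "r' = Max ((\<lambda>i. (\<Sum>j\<in>S. M i j * v j) / v i) ` S)"
      have "r' < \<rho>" unfolding r'_def
      proof (subst Max_less_iff)
        show "\<forall>a\<in>(\<lambda>i. (\<Sum>j\<in>S. M i j * v j) / v i) ` S. a < \<rho>"
        proof
          fix a assume "a \<in> (\<lambda>i. (\<Sum>j\<in>S. M i j * v j) / v i) ` S"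
          then obtain l where l: "l \<in> S" "a = (\<Sum>j\<in>S. M l j * v j) / v l" by auto
          have "l \<in> T v" using TvS l by auto
          hence "(\<Sum>j\<in>S. M l j * v j) < \<rho> * v l" unfolding T_def by auto
          thus "a < \<rho>" using l vp by (simp add: divide_less_eq)
        qed
      qed (use fin ne in auto)
      moreover have "r' \<in> Rs" unfolding Rs_def
      proof (intro CollectI exI[of _ v] conjI ballI)
        fix l assume l: "l \<in> S"
        have "(\<Sum>j\<in>S. M l j * v j) / v l \<le> r'" unfolding r'_def by (rule Max_ge) (use fin l in auto)
        thus "(\<Sum>j\<in>S. M l j * v j) \<le> r' * v l" using vp l by (simp add: divide_le_eq)
      qed (use vp in auto)
      ultimately show False using rho_le by fastforce
    qed
  qed
qed


lemma eig_unique: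
  assumes hp: "\<forall>i\<in>S. h i > 0" and he: "\<forall>i\<in>S. (\<Sum>j\<in>S. M i j * h j) = \<mu> * h i"
    and x0: "\<forall>i\<in>S. x i \<ge> 0" and xe: "\<forall>i\<in>S. (\<Sum>j\<in>S. M i j * x j) = \<mu> * x i"
    and xn: "\<exists>i\<in>S. x i \<noteq> 0"
  shows "\<exists>c. \<forall>i\<in>S. x i = c * h i"
proof -
  define c where "c = Min ((\<lambda>i. x i / h i) ` S)"
  have "c \<in> (\<lambda>i. x i / h i) ` S" unfolding c_def by (rule Min_in) (use fin ne in auto)
  then obtain k where k: "k \<in> S" "c = x k / h k" by auto
  have cle: "c \<le> x i / h i" if "i \<in> S" for i unfolding c_def by (rule Min_le) (use fin that in auto)
  define y where "y = (\<lambda>i. x i - c * h i)"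
  have y0: "\<forall>i\<in>S. y i \<ge> 0"
  proof
    fix i assume i: "i \<in> S"
    have "c * h i \<le> x i" using cle[OF i] hp i by (simp add: le_divide_eq)
    thus "y i \<ge> 0" unfolding y_def by simp
  qed
  have ye: "\<forall>i\<in>S. (\<Sum>j\<in>S. M i j * y j) = \<mu> * y i"
  proof
    fix i assume i: "i \<in> S"
    have "(\<Sum>j\<in>S. M i j * y j) = (\<Sum>j\<in>S. M i j * x j) - c * (\<Sum>j\<in>S. M i j * h j)"
      unfolding y_def by (simp add: algebra_simps sum_subtractf sum_distrib_left)
    also have "\<dots> = \<mu> * y i" using xe he i unfolding y_def by (simp add: algebra_simps)
    finally show "(\<Sum>j\<in>S. M i j * y j) = \<mu> * y i" .
  qed
  have "y k = 0" using k hp unfolding y_def by auto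
  hence "\<forall>i\<in>S. y i = 0" using zero_prop[OF y0 ye k(1)] by auto
  thus ?thesis unfolding y_def by auto
qed

lemma eig_eq:
  assumes hp: "\<forall>i\<in>S. h i > 0" and he: "\<forall>i\<in>S. (\<Sum>j\<in>S. M i j * h j) = \<mu> * h i"
    and pp: "\<forall>i\<in>S. p i > 0" and pe: "\<forall>j\<in>S. (\<Sum>i\<in>S. p i * M i j) = \<mu>' * p j"
  shows "\<mu> = \<mu>'"
proof -
  have "(\<Sum>i\<in>S. p i * (\<Sum>j\<in>S. M i j * h j)) = \<mu> * (\<Sum>i\<in>S. p i * h i)"
    using he by (simp add: sum_distrib_left algebra_simps)
  moreover have "(\<Sum>i\<in>S. p i * (\<Sum>j\<in>S. M i j * h j)) = (\<Sum>j\<in>S. (\<Sum>i\<in>S. p i * M i j) * h j)"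
  proof -
    have "(\<Sum>i\<in>S. p i * (\<Sum>j\<in>S. M i j * h j)) = (\<Sum>i\<in>S. \<Sum>j\<in>S. p i * M i j * h j)"
      by (simp add: sum_distrib_left mult.assoc)
    also have "\<dots> = (\<Sum>j\<in>S. \<Sum>i\<in>S. p i * M i j * h j)" by (rule sum.swap)
    also have "\<dots> = (\<Sum>j\<in>S. (\<Sum>i\<in>S. p i * M i j) * h j)" by (simp add: sum_distrib_right)
    finally show ?thesis .
  qed
  moreover have "\<dots> = \<mu>' * (\<Sum>i\<in>S. p i * h i)"
    using pe by (simp add: sum_distrib_left algebra_simps)
  moreover have "(\<Sum>i\<in>S. p i * h i) > 0" using hp pp fin ne by (intro sum_pos) auto
  ultimately show ?thesis by simp
qed

lemma pf_transpose: "pf S (\<lambda>i j. M j i)"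
proof
  show "finite S" "S \<noteq> {}" using fin ne by auto
  show "\<And>i j. i \<in> S \<Longrightarrow> j \<in> S \<Longrightarrow> i \<noteq> j \<Longrightarrow> 0 \<le> M j i" using offd by auto
  fix i j assume "i \<in> S" "j \<in> S"
  have "edg S (\<lambda>i j. M j i) = (edg S M)\<inverse>" unfolding edg_def by auto
  moreover have "(j, i) \<in> (edg S M)\<^sup>*" using irr \<open>i \<in> S\<close> \<open>j \<in> S\<close> by auto
  ultimately show "(i, j) \<in> (edg S (\<lambda>i j. M j i))\<^sup>*" by (simp add: rtrancl_converse)
qed

end

definition pfr :: "'a set \<Rightarrow> ('a \<Rightarrow> 'a \<Rightarrow> real) \<Rightarrow> real" where
  "pfr S M = (SOME \<rho>. \<exists>h. (\<forall>i\<in>S. h i > 0) \<and> (\<forall>i\<in>S. (\<Sum>j\<in>S. M i j * h j) = \<rho> * h i))"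

context pf begin

lemma pfr_eig: obtains h where "\<forall>i\<in>S. h i > 0" "\<forall>i\<in>S. (\<Sum>j\<in>S. M i j * h j) = pfr S M * h i"
  using someI_ex[OF pf_exists] unfolding pfr_def by blast

lemma pfr_left: obtains p where "\<forall>i\<in>S. p i > 0" "\<forall>j\<in>S. (\<Sum>i\<in>S. p i * M i j) = pfr S M * p j"
proof -
  interpret T: pf S "\<lambda>i j. M j i" by (rule pf_transpose)
  obtain \<rho>' p where p: "\<forall>i\<in>S. p i > 0" "\<forall>i\<in>S. (\<Sum>j\<in>S. M j i * p j) = \<rho>' * p i"
    using T.pf_exists by blast
  have pe: "\<forall>j\<in>S. (\<Sum>i\<in>S. p i * M i j) = \<rho>' * p j" using p(2) by (simp add: mult.commute)
  obtain h where h: "\<forall>i\<in>S. h i > 0" "\<forall>i\<in>S. (\<Sum>j\<in>S. M i j * h j) = pfr S M * h i" by (rule pfr_eig)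
  have "pfr S M = \<rho>'" using eig_eq[OF h p(1) pe] .
  thus ?thesis using that p(1) pe by auto
qed

lemma pfr_unique:
  assumes "\<forall>i\<in>S. h i > 0" "\<forall>i\<in>S. (\<Sum>j\<in>S. M i j * h j) = \<mu> * h i"
  shows "\<mu> = pfr S M"
proof -
  obtain p where "\<forall>i\<in>S. p i > 0" "\<forall>j\<in>S. (\<Sum>i\<in>S. p i * M i j) = pfr S M * p j" by (rule pfr_left)
  thus ?thesis using eig_eq assms by blast
qed

lemma left_unique:
  assumes pp: "\<forall>i\<in>S. p i > 0" and pe: "\<forall>j\<in>S. (\<Sum>i\<in>S. p i * M i j) = \<mu> * p j"
    and x0: "\<forall>i\<in>S. x i \<ge> 0" and xe: "\<forall>j\<in>S. (\<Sum>i\<in>S. x i * M i j) = \<mu> * x j"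
    and xn: "\<exists>i\<in>S. x i \<noteq> 0"
  shows "\<exists>c. \<forall>i\<in>S. x i = c * p i"
proof -
  interpret T: pf S "\<lambda>i j. M j i" by (rule pf_transpose)
  show ?thesis
    by (rule T.eig_unique[OF pp _ x0 _ xn]) (use pe xe in \<open>auto simp: mult.commute\<close>)
qed

lemma diag_le:
  assumes i: "i \<in> S" shows "M i i \<le> pfr S M"
proof -
  obtain h where h: "\<forall>i\<in>S. h i > 0" "\<forall>i\<in>S. (\<Sum>j\<in>S. M i j * h j) = pfr S M * h i" by (rule pfr_eig)
  have nn: "\<forall>j\<in>S - {i}. 0 \<le> M i j * h j" using i h by (auto intro!: offd_mult simp: less_imp_le)
  have "M i i * h i \<le> (\<Sum>j\<in>S. M i j * h j)"
    using sum_split[OF i, of "\<lambda>j. M i j * h j"] sum_nonneg[of "S - {i}" "\<lambda>j. M i j * h j"] nn by simp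
  also have "\<dots> = pfr S M * h i" using h i by auto
  finally show ?thesis using h i by simp
qed

lemma re_bound:
  assumes "is_eigenvalue_on S M \<mu>"
  shows "Re \<mu> \<le> pfr S M"
proof -
  obtain v where v0: "\<exists>i\<in>S. v i \<noteq> 0" and ev: "\<forall>i\<in>S. (\<Sum>j\<in>S. complex_of_real (M i j) * v j) = \<mu> * v i"
    using assms unfolding is_eigenvalue_on_def by auto
  obtain h where hp: "\<forall>i\<in>S. h i > 0" and he: "\<forall>i\<in>S. (\<Sum>j\<in>S. M i j * h j) = pfr S M * h i" by (rule pfr_eig)
  define \<rho> where "\<rho> = pfr S M"
  define c where "c = Max ((\<lambda>i. cmod (v i) / h i) ` S)"
  have "c \<in> (\<lambda>i. cmod (v i) / h i) ` S" unfolding c_def by (rule Max_in) (use fin ne in auto)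
  then obtain k where k: "k \<in> S" "c = cmod (v k) / h k" by auto
  have cge: "cmod (v i) / h i \<le> c" if "i \<in> S" for i unfolding c_def by (rule Max_ge) (use fin that in auto)
  have bnd: "cmod (v i) \<le> c * h i" if "i \<in> S" for i using cge[OF that] hp that by (simp add: divide_le_eq)
  from v0 obtain i1 where i1: "i1 \<in> S" "v i1 \<noteq> 0" by auto
  have "0 < cmod (v i1) / h i1" using i1 hp by auto
  hence cpos: "c > 0" using cge[OF i1(1)] by linarith
  have vk: "cmod (v k) = c * h k" using k hp by auto
  hence vkpos: "cmod (v k) > 0" using cpos hp k by auto
  have "(\<mu> - complex_of_real (M k k)) * v k = (\<Sum>j\<in>S - {k}. complex_of_real (M k j) * v j)"
    using ev k sum_split[OF k(1), of "\<lambda>j. complex_of_real (M k j) * v j"] by (simp add: algebra_simps)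
  hence "cmod (\<mu> - complex_of_real (M k k)) * cmod (v k) = cmod (\<Sum>j\<in>S - {k}. complex_of_real (M k j) * v j)"
    by (metis norm_mult)
  also have "\<dots> \<le> (\<Sum>j\<in>S - {k}. cmod (complex_of_real (M k j) * v j))" by (rule norm_sum)
  also have "\<dots> = (\<Sum>j\<in>S - {k}. M k j * cmod (v j))"
    by (rule sum.cong) (use offd k in \<open>auto simp: norm_mult\<close>)
  also have "\<dots> \<le> (\<Sum>j\<in>S - {k}. M k j * (c * h j))"
  proof (rule sum_mono)
    fix j assume j: "j \<in> S - {k}"
    have "M k j \<ge> 0" using offd[of k j] k(1) j by auto
    moreover have "cmod (v j) \<le> c * h j" using bnd[of j] j by auto
    ultimately show "M k j * cmod (v j) \<le> M k j * (c * h j)" by (rule mult_left_mono[rotated])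
  qed
  also have "\<dots> = c * ((\<Sum>j\<in>S. M k j * h j) - M k k * h k)"
    using sum_split[OF k(1), of "\<lambda>j. M k j * h j"] by (simp add: sum_distrib_left algebra_simps)
  also have "\<dots> = (\<rho> - M k k) * cmod (v k)" using he k vk unfolding \<rho>_def by (simp add: algebra_simps)
  finally have "cmod (\<mu> - complex_of_real (M k k)) \<le> \<rho> - M k k" using vkpos by simp
  moreover have "Re \<mu> - M k k \<le> cmod (\<mu> - complex_of_real (M k k))"
    using complex_Re_le_cmod[of "\<mu> - complex_of_real (M k k)"] by simp
  ultimately show ?thesis unfolding \<rho>_def by simp
qed

lemma principal: "principal_eig S M = pfr S M"
  unfolding principal_eig_def
proof (rule Max_eqI)
  show "finite (Re ` {\<mu>. is_eigenvalue_on S M \<mu>})" using finite_eigs[OF fin] by simp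
  show "\<And>y. y \<in> Re ` {\<mu>. is_eigenvalue_on S M \<mu>} \<Longrightarrow> y \<le> pfr S M" using re_bound by auto
  obtain h where hp: "\<forall>i\<in>S. h i > 0" and he: "\<forall>i\<in>S. (\<Sum>j\<in>S. M i j * h j) = pfr S M * h i" by (rule pfr_eig)
  have "is_eigenvalue_on S M (complex_of_real (pfr S M))" unfolding is_eigenvalue_on_def
  proof (intro exI[of _ "\<lambda>i. complex_of_real (h i)"] conjI ballI)
    show "\<exists>i\<in>S. complex_of_real (h i) \<noteq> 0" using hp ne by force
    fix i assume i: "i \<in> S"
    have "(\<Sum>j\<in>S. complex_of_real (M i j) * complex_of_real (h j)) = complex_of_real (\<Sum>j\<in>S. M i j * h j)"
      by simp
    also have "\<dots> = complex_of_real (pfr S M) * complex_of_real (h i)" using he i by simp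
    finally show "(\<Sum>j\<in>S. complex_of_real (M i j) * complex_of_real (h j)) = complex_of_real (pfr S M) * complex_of_real (h i)" .
  qed
  thus "pfr S M \<in> Re ` {\<mu>. is_eigenvalue_on S M \<mu>}" by force
qed

end

context pf begin

lemma sum_delta_add:
  assumes k: "k \<in> S"
  shows "(\<Sum>j\<in>S. M i j * (h j + (if j = k then t else 0))) = (\<Sum>j\<in>S. M i j * h j) + M i k * t"
proof -
  have "(\<Sum>j\<in>S. M i j * (h j + (if j = k then t else 0))) = (\<Sum>j\<in>S. M i j * h j + (if j = k then M i j * t else 0))"
    by (rule sum.cong) (auto simp: algebra_simps)
  also have "\<dots> = (\<Sum>j\<in>S. M i j * h j) + (\<Sum>j\<in>S. (if j = k then M i j * t else 0))"
    by (rule sum.distrib)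
  also have "(\<Sum>j\<in>S. (if j = k then M i j * t else 0)) = M i k * t" using k fin by (simp add: sum.delta')
  finally show ?thesis .
qed

lemma log_ineq:
  assumes pp: "\<forall>i\<in>S. p i > 0" and pe: "\<forall>j\<in>S. (\<Sum>i\<in>S. p i * M i j) = \<rho> * p j"
    and hp: "\<forall>i\<in>S. h i > 0" and he: "\<forall>i\<in>S. (\<Sum>j\<in>S. M i j * h j) = \<rho> * h i"
    and vp: "\<forall>i\<in>S. v i > 0"
  shows "\<rho> * (\<Sum>i\<in>S. p i * h i) \<le> (\<Sum>i\<in>S. p i * h i * (\<Sum>j\<in>S. M i j * v j) / v i)"
proof -
  define w where "w = (\<lambda>i. v i / h i)"
  have wp: "\<forall>i\<in>S. w i > 0" using vp hp unfolding w_def by auto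
  define c where "c = (\<lambda>i j. p i * M i j * h j)"
  have rhs: "(\<Sum>i\<in>S. p i * h i * (\<Sum>j\<in>S. M i j * v j) / v i) = (\<Sum>i\<in>S. \<Sum>j\<in>S. c i j * (w j / w i))"
  proof (rule sum.cong[OF refl])
    fix i assume i: "i \<in> S"
    have "p i * h i * (\<Sum>j\<in>S. M i j * v j) / v i = (\<Sum>j\<in>S. p i * h i * (M i j * v j) / v i)"
      by (simp add: sum_distrib_left sum_divide_distrib)
    also have "\<dots> = (\<Sum>j\<in>S. c i j * (w j / w i))"
    proof (rule sum.cong[OF refl])
      fix j assume j: "j \<in> S"
      have "h i > 0" "h j > 0" "v i > 0" "v j > 0" using hp vp i j by auto
      thus "p i * h i * (M i j * v j) / v i = c i j * (w j / w i)"
        unfolding c_def w_def by (simp add: field_simps)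
    qed
    finally show "p i * h i * (\<Sum>j\<in>S. M i j * v j) / v i = (\<Sum>j\<in>S. c i j * (w j / w i))" .
  qed
  have lhs: "\<rho> * (\<Sum>i\<in>S. p i * h i) = (\<Sum>i\<in>S. \<Sum>j\<in>S. c i j)"
  proof -
    have "(\<Sum>i\<in>S. \<Sum>j\<in>S. c i j) = (\<Sum>i\<in>S. p i * (\<Sum>j\<in>S. M i j * h j))"
      unfolding c_def by (simp add: sum_distrib_left mult.assoc)
    also have "\<dots> = (\<Sum>i\<in>S. \<rho> * (p i * h i))" using he by (intro sum.cong) auto
    also have "\<dots> = \<rho> * (\<Sum>i\<in>S. p i * h i)" by (simp add: sum_distrib_left)
    finally show ?thesis by simp
  qed
  have A: "(\<Sum>i\<in>S. \<Sum>j\<in>S. c i j * ln (w j)) = \<rho> * (\<Sum>j\<in>S. p j * h j * ln (w j))"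
  proof -
    have "(\<Sum>i\<in>S. \<Sum>j\<in>S. c i j * ln (w j)) = (\<Sum>j\<in>S. \<Sum>i\<in>S. c i j * ln (w j))" by (rule sum.swap)
    also have "\<dots> = (\<Sum>j\<in>S. (\<Sum>i\<in>S. p i * M i j) * (h j * ln (w j)))"
      unfolding c_def by (simp add: sum_distrib_right mult.assoc)
    also have "\<dots> = \<rho> * (\<Sum>j\<in>S. p j * h j * ln (w j))" using pe by (simp add: sum_distrib_left mult.assoc)
    finally show ?thesis .
  qed
  have B: "(\<Sum>i\<in>S. \<Sum>j\<in>S. c i j * ln (w i)) = \<rho> * (\<Sum>j\<in>S. p j * h j * ln (w j))"
  proof -
    have "(\<Sum>i\<in>S. \<Sum>j\<in>S. c i j * ln (w i)) = (\<Sum>i\<in>S. (p i * ln (w i)) * (\<Sum>j\<in>S. M i j * h j))"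
    proof (rule sum.cong[OF refl])
      fix i assume "i \<in> S"
      show "(\<Sum>j\<in>S. c i j * ln (w i)) = (p i * ln (w i)) * (\<Sum>j\<in>S. M i j * h j)"
        unfolding c_def sum_distrib_left by (rule sum.cong) (simp_all add: ac_simps)
    qed
    also have "\<dots> = (\<Sum>i\<in>S. \<rho> * (p i * h i * ln (w i)))" using he by (intro sum.cong) (auto simp: ac_simps)
    also have "\<dots> = \<rho> * (\<Sum>j\<in>S. p j * h j * ln (w j))" by (simp add: sum_distrib_left)
    finally show ?thesis .
  qed
  have eq0: "(\<Sum>i\<in>S. \<Sum>j\<in>S. c i j * (ln (w j) - ln (w i))) = 0"
    using A B by (simp add: right_diff_distrib sum_subtractf)
  have "(\<Sum>i\<in>S. \<Sum>j\<in>S. c i j * (ln (w j) - ln (w i))) \<le> (\<Sum>i\<in>S. \<Sum>j\<in>S. c i j * (w j / w i - 1))"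
  proof (intro sum_mono)
    fix i j assume i: "i \<in> S" and j: "j \<in> S"
    show "c i j * (ln (w j) - ln (w i)) \<le> c i j * (w j / w i - 1)"
    proof (cases "i = j")
      case True
      have "w j > 0" using wp j by auto
      thus ?thesis using True by simp
    next
      case False
      have "p i > 0" "h j > 0" using pp hp i j by auto
      hence "c i j \<ge> 0" unfolding c_def using offd[OF i j False] by (intro mult_nonneg_nonneg) auto
      moreover have "ln (w j) - ln (w i) \<le> w j / w i - 1"
      proof -
        have "w i > 0" "w j > 0" using wp i j by auto
        thus ?thesis using ln_le_minus_one[of "w j / w i"] by (simp add: ln_div)
      qed
      ultimately show ?thesis by (rule mult_left_mono[rotated])
    qed
  qed
  hence "0 \<le> (\<Sum>i\<in>S. \<Sum>j\<in>S. c i j * (w j / w i - 1))" using eq0 by simp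
  also have "\<dots> = (\<Sum>i\<in>S. \<Sum>j\<in>S. c i j * (w j / w i)) - (\<Sum>i\<in>S. \<Sum>j\<in>S. c i j)"
    by (simp add: right_diff_distrib sum_subtractf)
  finally show ?thesis using lhs rhs by simp
qed

lemma max_unique:
  assumes pp: "\<forall>i\<in>S. p i > 0" and pe: "\<forall>j\<in>S. (\<Sum>i\<in>S. p i * M i j) = \<rho> * p j"
    and hp: "\<forall>i\<in>S. h i > 0" and he: "\<forall>i\<in>S. (\<Sum>j\<in>S. M i j * h j) = \<rho> * h i"
    and n0: "\<forall>i\<in>S. \<nu> i \<ge> 0" and n1: "sum \<nu> S = 1"
    and mx: "\<And>v. \<forall>i\<in>S. v i > 0 \<Longrightarrow> \<rho> \<le> (\<Sum>i\<in>S. \<nu> i * (\<Sum>j\<in>S. M i j * v j) / v i)"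
  shows "\<exists>c. \<forall>i\<in>S. \<nu> i = c * (p i * h i)"
proof -
  define x where "x = (\<lambda>i. \<nu> i / h i)"
  have xe: "\<forall>k\<in>S. (\<Sum>i\<in>S. x i * M i k) = \<rho> * x k"
  proof
    fix k assume k: "k \<in> S"
    define A where "A = (\<Sum>i\<in>S - {k}. \<nu> i * M i k / h i)"
    define B where "B = \<nu> k * (M k k - \<rho>)"
    have hk: "h k > 0" using hp k by auto
    have key: "\<rho> \<le> \<rho> + t * (A + B / (h k + t))" if t: "\<bar>t\<bar> < h k" for t
    proof -
      define vt where "vt = (\<lambda>j. h j + (if j = k then t else 0))"
      have vtp: "\<forall>i\<in>S. vt i > 0" using hp t unfolding vt_def by auto
      have Mv: "(\<Sum>j\<in>S. M i j * vt j) = \<rho> * h i + M i k * t" if "i \<in> S" for i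
        unfolding vt_def using sum_delta_add[OF k, of i h t] he that by simp
      have "(\<Sum>i\<in>S. \<nu> i * (\<Sum>j\<in>S. M i j * vt j) / vt i)
          = \<nu> k * (\<rho> * h k + M k k * t) / (h k + t) + (\<Sum>i\<in>S - {k}. \<nu> i * (\<rho> * h i + M i k * t) / h i)"
        using sum_split[OF k, of "\<lambda>i. \<nu> i * (\<Sum>j\<in>S. M i j * vt j) / vt i"] Mv k
        by (simp add: vt_def)
      also have "(\<Sum>i\<in>S - {k}. \<nu> i * (\<rho> * h i + M i k * t) / h i) = (\<Sum>i\<in>S - {k}. \<rho> * \<nu> i + t * (\<nu> i * M i k / h i))"
        by (rule sum.cong[OF refl]) (use hp in \<open>auto simp: field_simps\<close>)
      also have "\<dots> = \<rho> * (\<Sum>i\<in>S - {k}. \<nu> i) + t * A"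
        unfolding A_def by (simp add: sum.distrib sum_distrib_left)
      also have "\<nu> k * (\<rho> * h k + M k k * t) / (h k + t) = \<rho> * \<nu> k + t * (B / (h k + t))"
      proof -
        have "h k + t > 0" using t by auto
        thus ?thesis unfolding B_def by (simp add: field_simps)
      qed
      finally have "(\<Sum>i\<in>S. \<nu> i * (\<Sum>j\<in>S. M i j * vt j) / vt i) = \<rho> * (\<nu> k + (\<Sum>i\<in>S - {k}. \<nu> i)) + t * (A + B / (h k + t))"
        by (simp add: algebra_simps)
      also have "\<nu> k + (\<Sum>i\<in>S - {k}. \<nu> i) = 1" using sum_split[OF k, of \<nu>] n1 by simp
      finally show ?thesis using mx[OF vtp] by simp
    qed
    define f where "f = (\<lambda>t. A + B / (h k + t))"
    have flim: "(f \<longlongrightarrow> A + B / h k) (at 0 within X)" for X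
    proof -
      have "((\<lambda>t. A + B / (h k + t)) \<longlongrightarrow> A + B / (h k + 0)) (at 0 within X)"
        by (intro tendsto_intros) (use hk in auto)
      thus ?thesis unfolding f_def by simp
    qed
    have ge: "A + B / h k \<ge> 0"
    proof (rule tendsto_lowerbound[OF flim[of "{0<..}"]])
      show "\<forall>\<^sub>F t in at_right 0. 0 \<le> f t"
        unfolding eventually_at_right_field
      proof (intro exI[of _ "h k"] conjI allI impI)
        fix t :: real assume "0 < t" "t < h k"
        hence "\<rho> \<le> \<rho> + t * f t" using key[of t] unfolding f_def by simp
        thus "0 \<le> f t" using \<open>0 < t\<close> by (simp add: zero_le_mult_iff)
      qed (use hk in auto)
    qed simp
    have le: "A + B / h k \<le> 0"
    proof (rule tendsto_upperbound[OF flim[of "{..<0}"]])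
      show "\<forall>\<^sub>F t in at_left 0. f t \<le> 0"
        unfolding eventually_at_left_field
      proof (intro exI[of _ "- h k"] conjI allI impI)
        fix t :: real assume "- h k < t" "t < 0"
        hence "\<rho> \<le> \<rho> + t * f t" using key[of t] unfolding f_def by simp
        thus "f t \<le> 0" using \<open>t < 0\<close> by (simp add: zero_le_mult_iff mult_le_0_iff)
      qed (use hk in auto)
    qed simp
    have "A + B / h k = 0" using ge le by simp
    moreover have "(\<Sum>i\<in>S. x i * M i k) = x k * M k k + A"
      using sum_split[OF k, of "\<lambda>i. x i * M i k"] unfolding A_def x_def by (simp add: algebra_simps)
    moreover have "B / h k = x k * M k k - \<rho> * x k" unfolding B_def x_def by (simp add: algebra_simps diff_divide_distrib)
    ultimately show "(\<Sum>i\<in>S. x i * M i k) = \<rho> * x k" by simp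
  qed
  have x0: "\<forall>i\<in>S. x i \<ge> 0" using n0 hp unfolding x_def by auto
  have xn: "\<exists>i\<in>S. x i \<noteq> 0"
  proof (rule ccontr)
    assume H: "\<not> (\<exists>i\<in>S. x i \<noteq> 0)"
    have "\<forall>i\<in>S. \<nu> i = 0"
    proof
      fix i assume i: "i \<in> S"
      hence "\<nu> i / h i = 0" "h i > 0" using H hp unfolding x_def by auto
      thus "\<nu> i = 0" by simp
    qed
    hence "sum \<nu> S = 0" by simp
    thus False using n1 by simp
  qed
  obtain c where c: "\<forall>i\<in>S. x i = c * p i" using left_unique[OF pp pe x0 xe xn] by blast
  show ?thesis
  proof (intro exI[of _ c] ballI)
    fix i assume i: "i \<in> S"
    have "\<nu> i / h i = c * p i" "h i > 0" using c hp i unfolding x_def by auto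
    thus "\<nu> i = c * (p i * h i)" by (simp add: field_simps)
  qed
qed

end

lemma plus_diag_sum:
  assumes "i \<in> S" "finite S"
  shows "(\<Sum>j\<in>S. plus_diag U Q i j * v j) = (\<Sum>j\<in>S. U i j * v j) + Q i * v i"
proof -
  have "(\<Sum>j\<in>S. plus_diag U Q i j * v j) = (\<Sum>j\<in>S. U i j * v j + (if i = j then Q i * v j else 0))"
    unfolding plus_diag_def by (rule sum.cong) (auto simp: algebra_simps)
  also have "\<dots> = (\<Sum>j\<in>S. U i j * v j) + (\<Sum>j\<in>S. (if i = j then Q i * v j else 0))" by (rule sum.distrib)
  also have "(\<Sum>j\<in>S. (if i = j then Q i * v j else 0)) = Q i * v i" using assms by (simp add: sum.delta)
  finally show ?thesis .
qed

locale mk =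
  fixes S :: "'a set" and U :: "'a \<Rightarrow> 'a \<Rightarrow> real"
  assumes fin: "finite S" and ne: "S \<noteq> {}" and gen: "markov_generator S U" and irrU: "irreducible_gen S U"
begin

lemma pfQ: "pf S (plus_diag U Q)"
proof
  show "finite S" "S \<noteq> {}" using fin ne by auto
  show "\<And>i j. i \<in> S \<Longrightarrow> j \<in> S \<Longrightarrow> i \<noteq> j \<Longrightarrow> 0 \<le> plus_diag U Q i j"
    using gen unfolding markov_generator_def plus_diag_def by auto
  have "edg S (plus_diag U Q) = {(a, b). a \<in> S \<and> b \<in> S \<and> a \<noteq> b \<and> U a b > 0}"
    unfolding edg_def plus_diag_def by auto
  thus "\<And>i j. i \<in> S \<Longrightarrow> j \<in> S \<Longrightarrow> (i, j) \<in> (edg S (plus_diag U Q))\<^sup>*"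
    using irrU unfolding irreducible_gen_def by auto
qed

lemma lam_pfr: "lam S U Q = pfr S (plus_diag U Q)"
  unfolding lam_def using pf.principal[OF pfQ] .

lemma rowsum: "i \<in> S \<Longrightarrow> (\<Sum>j\<in>S. U i j) = 0" using gen unfolding markov_generator_def by auto

lemma Uv_ge:
  assumes i: "i \<in> S" and v: "\<forall>j\<in>S. v j \<ge> 0"
  shows "U i i * v i \<le> (\<Sum>j\<in>S. U i j * v j)"
proof -
  have nn: "\<forall>j\<in>S - {i}. 0 \<le> U i j * v j"
  proof
    fix j assume j: "j \<in> S - {i}"
    hence "U i j \<ge> 0" using gen i unfolding markov_generator_def by auto
    thus "0 \<le> U i j * v j" using v j by simp
  qed
  show ?thesis using sum.remove[OF fin i, of "\<lambda>j. U i j * v j"] sum_nonneg[of "S - {i}" "\<lambda>j. U i j * v j"] nn by simp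
qed

lemma anc:
  "\<exists>p h. (\<forall>i\<in>S. p i > 0) \<and> (\<forall>i\<in>S. h i > 0)
     \<and> (\<forall>j\<in>S. (\<Sum>i\<in>S. p i * plus_diag U Q i j) = lam S U Q * p j)
     \<and> (\<forall>i\<in>S. (\<Sum>j\<in>S. plus_diag U Q i j * h j) = lam S U Q * h i)
     \<and> sum p S = 1 \<and> (\<Sum>i\<in>S. p i * h i) = 1
     \<and> ancestral S U Q = (\<lambda>i. if i \<in> S then p i * h i else 0)"
proof -
  interpret P: pf S "plus_diag U Q" by (rule pfQ)
  define \<rho> where "\<rho> = lam S U Q"
  have rho: "\<rho> = pfr S (plus_diag U Q)" unfolding \<rho>_def by (rule lam_pfr)
  obtain p0 where p0: "\<forall>i\<in>S. p0 i > 0" "\<forall>j\<in>S. (\<Sum>i\<in>S. p0 i * plus_diag U Q i j) = \<rho> * p0 j"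
    using P.pfr_left rho by metis
  obtain h0 where h0: "\<forall>i\<in>S. h0 i > 0" "\<forall>i\<in>S. (\<Sum>j\<in>S. plus_diag U Q i j * h0 j) = \<rho> * h0 i"
    using P.pfr_eig rho by metis
  define sp where "sp = sum p0 S"
  have sp: "sp > 0" unfolding sp_def using p0 fin ne by (intro sum_pos) auto
  define p where "p = (\<lambda>i. p0 i / sp)"
  define sh where "sh = (\<Sum>i\<in>S. p i * h0 i)"
  have pp: "\<forall>i\<in>S. p i > 0" using p0 sp unfolding p_def by auto
  have sh: "sh > 0" unfolding sh_def using pp h0 fin ne by (intro sum_pos) auto
  define h where "h = (\<lambda>i. h0 i / sh)"
  have hp: "\<forall>i\<in>S. h i > 0" using h0 sh unfolding h_def by auto
  have pe: "\<forall>j\<in>S. (\<Sum>i\<in>S. p i * plus_diag U Q i j) = \<rho> * p j"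
  proof
    fix j assume j: "j \<in> S"
    have "(\<Sum>i\<in>S. p i * plus_diag U Q i j) = (\<Sum>i\<in>S. p0 i * plus_diag U Q i j) / sp"
      unfolding p_def by (simp add: sum_divide_distrib)
    thus "(\<Sum>i\<in>S. p i * plus_diag U Q i j) = \<rho> * p j" using p0 j unfolding p_def by simp
  qed
  have he: "\<forall>i\<in>S. (\<Sum>j\<in>S. plus_diag U Q i j * h j) = \<rho> * h i"
  proof
    fix i assume i: "i \<in> S"
    have "(\<Sum>j\<in>S. plus_diag U Q i j * h j) = (\<Sum>j\<in>S. plus_diag U Q i j * h0 j) / sh"
      unfolding h_def by (simp add: sum_divide_distrib)
    thus "(\<Sum>j\<in>S. plus_diag U Q i j * h j) = \<rho> * h i" using h0 i unfolding h_def by simp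
  qed
  have ps: "sum p S = 1" unfolding p_def sp_def using sp unfolding sp_def by (simp add: sum_divide_distrib[symmetric])
  have phs: "(\<Sum>i\<in>S. p i * h i) = 1" unfolding h_def using sh unfolding sh_def
    by (simp add: sum_divide_distrib[symmetric])
  have A: "ancestral S U Q = (\<lambda>i. if i \<in> S then p i * h i else 0)"
    unfolding ancestral_def
  proof (rule the_equality)
    show "\<exists>\<pi> h'. (\<forall>i\<in>S. \<pi> i > 0 \<and> h' i > 0) \<and>
      (\<forall>j\<in>S. (\<Sum>i\<in>S. \<pi> i * plus_diag U Q i j) = lam S U Q * \<pi> j) \<and>
      (\<forall>i\<in>S. (\<Sum>j\<in>S. plus_diag U Q i j * h' j) = lam S U Q * h' i) \<and>
      sum \<pi> S = 1 \<and> (\<Sum>i\<in>S. \<pi> i * h' i) = 1 \<and>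
      (\<lambda>i. if i \<in> S then p i * h i else 0) = (\<lambda>i. if i \<in> S then \<pi> i * h' i else 0)"
      apply (rule exI[of _ p], rule exI[of _ h])
      using pp hp pe he ps phs unfolding \<rho>_def by simp
  next
    fix \<alpha> assume "\<exists>\<pi> h'. (\<forall>i\<in>S. \<pi> i > 0 \<and> h' i > 0) \<and>
      (\<forall>j\<in>S. (\<Sum>i\<in>S. \<pi> i * plus_diag U Q i j) = lam S U Q * \<pi> j) \<and>
      (\<forall>i\<in>S. (\<Sum>j\<in>S. plus_diag U Q i j * h' j) = lam S U Q * h' i) \<and>
      sum \<pi> S = 1 \<and> (\<Sum>i\<in>S. \<pi> i * h' i) = 1 \<and>
      \<alpha> = (\<lambda>i. if i \<in> S then \<pi> i * h' i else 0)"
    then obtain \<pi> h' where H: "\<forall>i\<in>S. \<pi> i > 0 \<and> h' i > 0"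
      "\<forall>j\<in>S. (\<Sum>i\<in>S. \<pi> i * plus_diag U Q i j) = \<rho> * \<pi> j"
      "\<forall>i\<in>S. (\<Sum>j\<in>S. plus_diag U Q i j * h' j) = \<rho> * h' i"
      "sum \<pi> S = 1" "(\<Sum>i\<in>S. \<pi> i * h' i) = 1" "\<alpha> = (\<lambda>i. if i \<in> S then \<pi> i * h' i else 0)"
      by (elim exE conjE) (rule that, simp_all add: \<rho>_def)
    obtain i0 where i0: "i0 \<in> S" using ne by auto
    have pi0: "\<forall>i\<in>S. \<pi> i \<ge> 0" using H(1) by (auto simp: less_imp_le)
    have pin: "\<exists>i\<in>S. \<pi> i \<noteq> 0" using H(1) i0 by force
    obtain c where c: "\<forall>i\<in>S. \<pi> i = c * p i"
      using P.left_unique[OF pp pe pi0 H(2) pin] by blast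
    have "sum \<pi> S = c * sum p S" using c by (simp add: sum_distrib_left)
    hence c1: "c = 1" using H(4) ps by simp
    have h0': "\<forall>i\<in>S. h' i \<ge> 0" using H(1) by (auto simp: less_imp_le)
    have hn': "\<exists>i\<in>S. h' i \<noteq> 0" using H(1) i0 by force
    obtain c' where c': "\<forall>i\<in>S. h' i = c' * h i"
      using P.eig_unique[OF hp he h0' H(3) hn'] by blast
    have "(\<Sum>i\<in>S. \<pi> i * h' i) = c' * (\<Sum>i\<in>S. p i * h i)"
      using c c' c1 by (simp add: sum_distrib_left algebra_simps)
    hence c1': "c' = 1" using H(5) phs by simp
    show "\<alpha> = (\<lambda>i. if i \<in> S then p i * h i else 0)"
      using H(6) c c' c1 c1' by auto
  qed
  show ?thesis
    apply (rule exI[of _ p], rule exI[of _ h])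
    using pp hp pe he ps phs A unfolding \<rho>_def by simp
qed

lemma rate_bdd:
  assumes nu: "\<nu> \<in> prob_vecs S"
  shows "bdd_above ((\<lambda>v. - (\<Sum>i\<in>S. \<nu> i * (\<Sum>j\<in>S. U i j * v j) / v i)) ` {v. \<forall>i\<in>S. v i > 0})"
proof (rule bdd_aboveI2)
  fix v :: "'a \<Rightarrow> real" assume "v \<in> {v. \<forall>i\<in>S. v i > 0}"
  hence vp: "\<forall>i\<in>S. v i > 0" by auto
  have "(\<Sum>i\<in>S. \<nu> i * U i i) \<le> (\<Sum>i\<in>S. \<nu> i * (\<Sum>j\<in>S. U i j * v j) / v i)"
  proof (rule sum_mono)
    fix i assume i: "i \<in> S"
    have "U i i * v i \<le> (\<Sum>j\<in>S. U i j * v j)" using Uv_ge[OF i] vp by (auto simp: less_imp_le)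
    hence "U i i \<le> (\<Sum>j\<in>S. U i j * v j) / v i" using vp i by (simp add: le_divide_eq)
    moreover have "\<nu> i \<ge> 0" using nu i unfolding prob_vecs_def by auto
    ultimately have "\<nu> i * U i i \<le> \<nu> i * ((\<Sum>j\<in>S. U i j * v j) / v i)"
      by (rule mult_left_mono)
    thus "\<nu> i * U i i \<le> \<nu> i * (\<Sum>j\<in>S. U i j * v j) / v i" by simp
  qed
  thus "- (\<Sum>i\<in>S. \<nu> i * (\<Sum>j\<in>S. U i j * v j) / v i) \<le> - (\<Sum>i\<in>S. \<nu> i * U i i)" by simp
qed

lemma rate_ge:
  assumes "\<nu> \<in> prob_vecs S" "\<forall>i\<in>S. v i > 0"
  shows "- (\<Sum>i\<in>S. \<nu> i * (\<Sum>j\<in>S. U i j * v j) / v i) \<le> rate_I S U \<nu>"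
  unfolding rate_I_def
  using cSUP_upper[of v "{v. \<forall>i\<in>S. v i > 0}" "\<lambda>v. - (\<Sum>i\<in>S. \<nu> i * (\<Sum>j\<in>S. U i j * v j) / v i)", OF _ rate_bdd[OF assms(1)]]
    assms(2) by simp

lemma rate_le:
  assumes H: "\<And>v. \<forall>i\<in>S. v i > 0 \<Longrightarrow> - (\<Sum>i\<in>S. \<nu> i * (\<Sum>j\<in>S. U i j * v j) / v i) \<le> C"
  shows "rate_I S U \<nu> \<le> C"
proof -
  have "(\<lambda>_. 1::real) \<in> {v. \<forall>i\<in>S. v i > 0}" by simp
  hence ne: "{v. \<forall>i\<in>S. v i > (0::real)} \<noteq> {}" by (metis empty_iff)
  have "(SUP v\<in>{v. \<forall>i\<in>S. v i > 0}. - (\<Sum>i\<in>S. \<nu> i * (\<Sum>j\<in>S. U i j * v j) / v i)) \<le> C"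
  proof (rule cSUP_least[OF ne])
    fix v :: "'a \<Rightarrow> real" assume "v \<in> {v. \<forall>i\<in>S. v i > 0}"
    hence "\<forall>i\<in>S. v i > 0" by simp
    thus "- (\<Sum>i\<in>S. \<nu> i * (\<Sum>j\<in>S. U i j * v j) / v i) \<le> C" by (rule H)
  qed
  thus ?thesis unfolding rate_I_def .
qed

lemma rate_nonneg:
  assumes "\<nu> \<in> prob_vecs S" shows "rate_I S U \<nu> \<ge> 0"
proof -
  have "- (\<Sum>i\<in>S. \<nu> i * (\<Sum>j\<in>S. U i j * 1) / 1) \<le> rate_I S U \<nu>"
    using rate_ge[OF assms, of "\<lambda>_. 1"] by simp
  moreover have "(\<Sum>i\<in>S. \<nu> i * (\<Sum>j\<in>S. U i j * 1) / 1) = 0" using rowsum by simp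
  ultimately show ?thesis by simp
qed

lemma Mv_div:
  assumes "\<forall>i\<in>S. v i > 0"
  shows "(\<Sum>i\<in>S. \<nu> i * (\<Sum>j\<in>S. plus_diag U Q i j * v j) / v i)
       = (\<Sum>i\<in>S. \<nu> i * (\<Sum>j\<in>S. U i j * v j) / v i) + (\<Sum>i\<in>S. \<nu> i * Q i)"
proof -
  have "(\<Sum>i\<in>S. \<nu> i * (\<Sum>j\<in>S. plus_diag U Q i j * v j) / v i)
      = (\<Sum>i\<in>S. \<nu> i * (\<Sum>j\<in>S. U i j * v j) / v i + \<nu> i * Q i)"
  proof (rule sum.cong[OF refl])
    fix i assume i: "i \<in> S"
    have vi: "v i > 0" using assms i by auto
    define a where "a = (\<Sum>j\<in>S. U i j * v j)"
    have "\<nu> i * (a + Q i * v i) / v i = \<nu> i * a / v i + \<nu> i * Q i * v i / v i"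
      by (simp add: distrib_left add_divide_distrib mult.assoc)
    also have "\<nu> i * Q i * v i / v i = \<nu> i * Q i" using vi by simp
    finally show "\<nu> i * (\<Sum>j\<in>S. plus_diag U Q i j * v j) / v i = \<nu> i * (\<Sum>j\<in>S. U i j * v j) / v i + \<nu> i * Q i"
      using plus_diag_sum[OF i fin] unfolding a_def by simp
  qed
  thus ?thesis by (simp add: sum.distrib)
qed

lemma DV_upper:
  assumes nu: "\<nu> \<in> prob_vecs S"
  shows "(\<Sum>i\<in>S. \<nu> i * Q i) - rate_I S U \<nu> \<le> lam S U Q"
proof -
  interpret P: pf S "plus_diag U Q" by (rule pfQ)
  obtain h where hp: "\<forall>i\<in>S. h i > 0" and he: "\<forall>i\<in>S. (\<Sum>j\<in>S. plus_diag U Q i j * h j) = lam S U Q * h i"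
    using P.pfr_eig lam_pfr by metis
  have "(\<Sum>i\<in>S. \<nu> i * (\<Sum>j\<in>S. plus_diag U Q i j * h j) / h i) = (\<Sum>i\<in>S. \<nu> i * lam S U Q)"
  proof (rule sum.cong[OF refl])
    fix i assume i: "i \<in> S"
    have "h i > 0" using hp i by auto
    thus "\<nu> i * (\<Sum>j\<in>S. plus_diag U Q i j * h j) / h i = \<nu> i * lam S U Q" using he i by simp
  qed
  also have "\<dots> = lam S U Q" using nu unfolding prob_vecs_def by (simp add: sum_distrib_right[symmetric])
  finally have "(\<Sum>i\<in>S. \<nu> i * (\<Sum>j\<in>S. U i j * h j) / h i) + (\<Sum>i\<in>S. \<nu> i * Q i) = lam S U Q"
    using Mv_div[OF hp] by simp
  thus ?thesis using rate_ge[OF nu hp] by simp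
qed

lemma anc_prob: "ancestral S U Q \<in> prob_vecs S"
proof -
  obtain p h where H: "\<forall>i\<in>S. p i > 0" "\<forall>i\<in>S. h i > 0" "(\<Sum>i\<in>S. p i * h i) = 1"
    "ancestral S U Q = (\<lambda>i. if i \<in> S then p i * h i else 0)" using anc by blast
  have "sum (ancestral S U Q) S = (\<Sum>i\<in>S. p i * h i)" unfolding H(4) by (rule sum.cong) auto
  thus ?thesis using H unfolding prob_vecs_def by (auto intro: mult_nonneg_nonneg less_imp_le)
qed

lemma DV_anc: "(\<Sum>i\<in>S. ancestral S U Q i * Q i) - rate_I S U (ancestral S U Q) = lam S U Q"
proof -
  interpret P: pf S "plus_diag U Q" by (rule pfQ)
  obtain p h where pp: "\<forall>i\<in>S. p i > 0" and hp: "\<forall>i\<in>S. h i > 0"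
    and pe: "\<forall>j\<in>S. (\<Sum>i\<in>S. p i * plus_diag U Q i j) = lam S U Q * p j"
    and he: "\<forall>i\<in>S. (\<Sum>j\<in>S. plus_diag U Q i j * h j) = lam S U Q * h i"
    and phs: "(\<Sum>i\<in>S. p i * h i) = 1"
    and A: "ancestral S U Q = (\<lambda>i. if i \<in> S then p i * h i else 0)" using anc by blast
  define \<alpha> where "\<alpha> = ancestral S U Q"
  have "rate_I S U \<alpha> \<le> (\<Sum>i\<in>S. \<alpha> i * Q i) - lam S U Q"
  proof (rule rate_le)
    fix v :: "'a \<Rightarrow> real" assume vp: "\<forall>i\<in>S. v i > 0"
    have "lam S U Q \<le> (\<Sum>i\<in>S. p i * h i * (\<Sum>j\<in>S. plus_diag U Q i j * v j) / v i)"
      using P.log_ineq[OF pp pe hp he vp] phs by simp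
    also have "\<dots> = (\<Sum>i\<in>S. \<alpha> i * (\<Sum>j\<in>S. plus_diag U Q i j * v j) / v i)"
      unfolding \<alpha>_def A by (rule sum.cong) auto
    also have "\<dots> = (\<Sum>i\<in>S. \<alpha> i * (\<Sum>j\<in>S. U i j * v j) / v i) + (\<Sum>i\<in>S. \<alpha> i * Q i)"
      by (rule Mv_div[OF vp])
    finally show "- (\<Sum>i\<in>S. \<alpha> i * (\<Sum>j\<in>S. U i j * v j) / v i) \<le> (\<Sum>i\<in>S. \<alpha> i * Q i) - lam S U Q"
      by simp
  qed
  moreover have "(\<Sum>i\<in>S. \<alpha> i * Q i) - rate_I S U \<alpha> \<le> lam S U Q"
    unfolding \<alpha>_def by (rule DV_upper[OF anc_prob])
  ultimately show ?thesis unfolding \<alpha>_def by simp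
qed

lemma max_char':
  assumes nu: "\<nu> \<in> prob_vecs S"
    and mx: "\<And>v. \<forall>i\<in>S. v i > 0 \<Longrightarrow> lam S U Q \<le> (\<Sum>i\<in>S. \<nu> i * (\<Sum>j\<in>S. U i j * v j) / v i) + (\<Sum>i\<in>S. \<nu> i * Q i)"
  shows "\<nu> = ancestral S U Q"
proof -
  interpret P: pf S "plus_diag U Q" by (rule pfQ)
  obtain p h where pp: "\<forall>i\<in>S. p i > 0" and hp: "\<forall>i\<in>S. h i > 0"
    and pe: "\<forall>j\<in>S. (\<Sum>i\<in>S. p i * plus_diag U Q i j) = lam S U Q * p j"
    and he: "\<forall>i\<in>S. (\<Sum>j\<in>S. plus_diag U Q i j * h j) = lam S U Q * h i"
    and phs: "(\<Sum>i\<in>S. p i * h i) = 1"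
    and A: "ancestral S U Q = (\<lambda>i. if i \<in> S then p i * h i else 0)" using anc by blast
  have n0: "\<forall>i\<in>S. \<nu> i \<ge> 0" and n1: "sum \<nu> S = 1" and nout: "\<forall>i. i \<notin> S \<longrightarrow> \<nu> i = 0"
    using nu unfolding prob_vecs_def by auto
  have mx': "lam S U Q \<le> (\<Sum>i\<in>S. \<nu> i * (\<Sum>j\<in>S. plus_diag U Q i j * v j) / v i)"
    if vp: "\<forall>i\<in>S. v i > 0" for v
    using mx[OF vp] Mv_div[OF vp, of \<nu>] by simp
  obtain c where c: "\<forall>i\<in>S. \<nu> i = c * (p i * h i)"
    using P.max_unique[OF pp pe hp he n0 n1 mx'] by blast
  have "sum \<nu> S = c * (\<Sum>i\<in>S. p i * h i)" using c by (simp add: sum_distrib_left)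
  hence "c = 1" using n1 phs by simp
  thus ?thesis unfolding A using c nout by auto
qed

lemma max_char:
  assumes nu: "\<nu> \<in> prob_vecs S" and ge: "lam S U Q \<le> (\<Sum>i\<in>S. \<nu> i * Q i) - rate_I S U \<nu>"
  shows "\<nu> = ancestral S U Q"
proof (rule max_char'[OF nu])
  fix v :: "'a \<Rightarrow> real" assume vp: "\<forall>i\<in>S. v i > 0"
  show "lam S U Q \<le> (\<Sum>i\<in>S. \<nu> i * (\<Sum>j\<in>S. U i j * v j) / v i) + (\<Sum>i\<in>S. \<nu> i * Q i)"
    using rate_ge[OF nu vp] ge by simp
qed

end

locale mkd = mk S U for S :: "(real^'d) set" and U +
  fixes R :: "real^'d \<Rightarrow> real"
begin

abbreviation "F \<beta> \<equiv> lam S U (\<lambda>i. R i + \<beta> \<bullet> i)"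
abbreviation "A \<beta> \<equiv> ancestral S U (\<lambda>i. R i + \<beta> \<bullet> i)"
abbreviation "m \<beta> \<equiv> (\<Sum>i\<in>S. A \<beta> i *\<^sub>R i)"

lemma sumQ: "(\<Sum>i\<in>S. \<nu> i * (R i + \<beta> \<bullet> i)) = (\<Sum>i\<in>S. \<nu> i * R i) + \<beta> \<bullet> (\<Sum>i\<in>S. \<nu> i *\<^sub>R i)"
  by (simp add: inner_sum_right distrib_left sum.distrib)

lemma prob_bounds: assumes "\<nu> \<in> prob_vecs S" "i \<in> S" shows "0 \<le> \<nu> i" "\<nu> i \<le> 1"
proof -
  show "0 \<le> \<nu> i" using assms unfolding prob_vecs_def by auto
  have "\<nu> i \<le> sum \<nu> S" by (rule member_le_sum) (use assms fin in \<open>auto simp: prob_vecs_def\<close>)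
  thus "\<nu> i \<le> 1" using assms unfolding prob_vecs_def by auto
qed

lemma DVb: "(\<Sum>i\<in>S. A \<beta> i * R i) + \<beta> \<bullet> m \<beta> - rate_I S U (A \<beta>) = F \<beta>"
  using DV_anc[of "\<lambda>i. R i + \<beta> \<bullet> i"] sumQ[of "A \<beta>" \<beta>] by simp

lemma DVb_upper: "\<nu> \<in> prob_vecs S \<Longrightarrow> (\<Sum>i\<in>S. \<nu> i * R i) + \<beta> \<bullet> (\<Sum>i\<in>S. \<nu> i *\<^sub>R i) - rate_I S U \<nu> \<le> F \<beta>"
  using DV_upper[of \<nu> "\<lambda>i. R i + \<beta> \<bullet> i"] sumQ[of \<nu> \<beta>] by simp

lemma F_sub: "F \<beta> + (\<beta>' - \<beta>) \<bullet> m \<beta> \<le> F \<beta>'"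
  using DVb[of \<beta>] DVb_upper[OF anc_prob, of "\<lambda>i. R i + \<beta> \<bullet> i" \<beta>'] by (simp add: inner_diff_left)

definition "Bn = (\<Sum>i\<in>S. norm i)"

lemma m_bound: "norm (m \<beta>) \<le> Bn"
proof -
  have "norm (m \<beta>) \<le> (\<Sum>i\<in>S. norm (A \<beta> i *\<^sub>R i))" by (rule norm_sum)
  also have "\<dots> \<le> (\<Sum>i\<in>S. norm i)"
  proof (rule sum_mono)
    fix i assume i: "i \<in> S"
    have "0 \<le> A \<beta> i" "A \<beta> i \<le> 1" using prob_bounds[OF anc_prob i] by auto
    thus "norm (A \<beta> i *\<^sub>R i) \<le> norm i" by (simp add: mult_left_le_one_le)
  qed
  finally show ?thesis unfolding Bn_def .
qed

lemma F_lip: "\<bar>F \<beta>' - F \<beta>\<bar> \<le> Bn * norm (\<beta>' - \<beta>)"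
proof -
  have cs: "\<bar>x \<bullet> m b\<bar> \<le> Bn * norm x" for x b
  proof -
    have "\<bar>x \<bullet> m b\<bar> \<le> norm x * norm (m b)" by (rule Cauchy_Schwarz_ineq2)
    also have "\<dots> \<le> norm x * Bn" by (rule mult_left_mono[OF m_bound norm_ge_zero])
    finally show ?thesis by (simp add: mult.commute)
  qed
  have "\<bar>(\<beta>' - \<beta>) \<bullet> m \<beta>\<bar> \<le> Bn * norm (\<beta>' - \<beta>)" by (rule cs)
  moreover have "\<bar>(\<beta> - \<beta>') \<bullet> m \<beta>'\<bar> \<le> Bn * norm (\<beta>' - \<beta>)"
    using cs[of "\<beta> - \<beta>'" \<beta>'] norm_minus_commute[of \<beta> \<beta>'] by simp
  moreover have "F \<beta> + (\<beta>' - \<beta>) \<bullet> m \<beta> \<le> F \<beta>'" by (rule F_sub)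
  moreover have "F \<beta>' + (\<beta> - \<beta>') \<bullet> m \<beta>' \<le> F \<beta>" by (rule F_sub)
  ultimately show ?thesis by linarith
qed

lemma F_tendsto: "X \<longlonglongrightarrow> \<beta> \<Longrightarrow> (\<lambda>n. F (X n)) \<longlonglongrightarrow> F \<beta>"
proof -
  assume X: "X \<longlonglongrightarrow> \<beta>"
  have "(\<lambda>n. F (X n) - F \<beta>) \<longlonglongrightarrow> 0"
  proof (rule Lim_null_comparison)
    show "\<forall>\<^sub>F n in sequentially. norm (F (X n) - F \<beta>) \<le> Bn * norm (X n - \<beta>)"
      using F_lip by simp
    have "(\<lambda>n. X n - \<beta>) \<longlonglongrightarrow> 0" using X by (simp add: LIM_zero)
    hence "(\<lambda>n. norm (X n - \<beta>)) \<longlonglongrightarrow> 0" by (simp add: tendsto_norm_zero)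
    thus "(\<lambda>n. Bn * norm (X n - \<beta>)) \<longlonglongrightarrow> 0" using tendsto_mult_left[of _ 0 _ Bn] by fastforce
  qed
  thus ?thesis by (simp add: LIM_zero_iff)
qed

lemma A_tendsto:
  assumes X: "X \<longlonglongrightarrow> \<beta>" and k: "k \<in> S"
  shows "(\<lambda>n. A (X n) k) \<longlonglongrightarrow> A \<beta> k"
proof (rule ccontr)
  assume "\<not> (\<lambda>n. A (X n) k) \<longlonglongrightarrow> A \<beta> k"
  hence "\<exists>\<epsilon>>0. \<forall>N. \<exists>n\<ge>N. \<not> norm (A (X n) k - A \<beta> k) < \<epsilon>"
    unfolding LIMSEQ_iff by simp
  then obtain \<epsilon> where \<epsilon>: "\<epsilon> > 0" and fr: "\<forall>N. \<exists>n\<ge>N. \<not> norm (A (X n) k - A \<beta> k) < \<epsilon>"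
    by blast
  define I where "I = {n. \<epsilon> \<le> \<bar>A (X n) k - A \<beta> k\<bar>}"
  have "infinite I" unfolding infinite_nat_iff_unbounded_le
  proof
    fix N
    obtain n where n: "n \<ge> N" "\<not> norm (A (X n) k - A \<beta> k) < \<epsilon>" using fr by blast
    hence "n \<in> I" unfolding I_def by simp
    thus "\<exists>n\<ge>N. n \<in> I" using n(1) by blast
  qed
  then obtain r1 :: "nat \<Rightarrow> nat" where r1: "strict_mono r1" "\<And>n. r1 n \<in> I" using infinite_enumerate by blast
  have bnd: "\<bar>A (X (r1 n)) i\<bar> \<le> 1" if "i \<in> S" for n i using prob_bounds[OF anc_prob that] by auto
  obtain r2 L where r2: "strict_mono r2" and L: "\<forall>i\<in>S. (\<lambda>n. A (X (r1 (r2 n))) i) \<longlonglongrightarrow> L i"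
    using finite_BW[OF fin, of "\<lambda>n i. A (X (r1 n)) i" "\<lambda>_. 1"] bnd by blast
  define Y where "Y = (\<lambda>n. X (r1 (r2 n)))"
  have Y: "Y \<longlonglongrightarrow> \<beta>" unfolding Y_def
    using LIMSEQ_subseq_LIMSEQ[OF LIMSEQ_subseq_LIMSEQ[OF X r1(1)] r2] by (simp add: o_def)
  have LY: "\<forall>i\<in>S. (\<lambda>n. A (Y n) i) \<longlonglongrightarrow> L i" using L unfolding Y_def by simp
  define \<nu> where "\<nu> = (\<lambda>i. if i \<in> S then L i else 0)"
  have L0: "L i \<ge> 0" if "i \<in> S" for i
    by (rule LIMSEQ_le_const[OF LY[rule_format, OF that]]) (use prob_bounds[OF anc_prob that] in auto)
  have "(\<lambda>n. \<Sum>i\<in>S. A (Y n) i) \<longlonglongrightarrow> (\<Sum>i\<in>S. L i)" by (rule tendsto_sum) (use LY in auto)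
  moreover have "(\<lambda>n. \<Sum>i\<in>S. A (Y n) i) = (\<lambda>n. 1)"
    using anc_prob unfolding prob_vecs_def by auto
  ultimately have "(\<lambda>n. 1) \<longlonglongrightarrow> (\<Sum>i\<in>S. L i)" by simp
  hence L1: "(\<Sum>i\<in>S. L i) = 1" using LIMSEQ_unique[OF _ tendsto_const] by blast
  have nuP: "\<nu> \<in> prob_vecs S" unfolding prob_vecs_def \<nu>_def using L0 L1 by auto
  have "\<nu> = A \<beta>"
  proof (rule max_char'[OF nuP])
    fix v :: "real^'d \<Rightarrow> real" assume vp: "\<forall>i\<in>S. v i > 0"
    show "F \<beta> \<le> (\<Sum>i\<in>S. \<nu> i * (\<Sum>j\<in>S. U i j * v j) / v i) + (\<Sum>i\<in>S. \<nu> i * (R i + \<beta> \<bullet> i))"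
    proof (rule LIMSEQ_le)
      show "(\<lambda>n. F (Y n)) \<longlonglongrightarrow> F \<beta>" by (rule F_tendsto[OF Y])
      have "(\<lambda>n. (\<Sum>i\<in>S. A (Y n) i * (\<Sum>j\<in>S. U i j * v j) / v i) + (\<Sum>i\<in>S. A (Y n) i * (R i + Y n \<bullet> i)))
          \<longlonglongrightarrow> (\<Sum>i\<in>S. L i * (\<Sum>j\<in>S. U i j * v j) / v i) + (\<Sum>i\<in>S. L i * (R i + \<beta> \<bullet> i))"
        by (intro tendsto_intros Y) (use LY vp in force)+
      moreover have "(\<Sum>i\<in>S. L i * (\<Sum>j\<in>S. U i j * v j) / v i) + (\<Sum>i\<in>S. L i * (R i + \<beta> \<bullet> i))
          = (\<Sum>i\<in>S. \<nu> i * (\<Sum>j\<in>S. U i j * v j) / v i) + (\<Sum>i\<in>S. \<nu> i * (R i + \<beta> \<bullet> i))"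
        unfolding \<nu>_def by simp
      ultimately show "(\<lambda>n. (\<Sum>i\<in>S. A (Y n) i * (\<Sum>j\<in>S. U i j * v j) / v i) + (\<Sum>i\<in>S. A (Y n) i * (R i + Y n \<bullet> i)))
          \<longlonglongrightarrow> (\<Sum>i\<in>S. \<nu> i * (\<Sum>j\<in>S. U i j * v j) / v i) + (\<Sum>i\<in>S. \<nu> i * (R i + \<beta> \<bullet> i))" by simp
      show "\<exists>N. \<forall>n\<ge>N. F (Y n) \<le> (\<Sum>i\<in>S. A (Y n) i * (\<Sum>j\<in>S. U i j * v j) / v i) + (\<Sum>i\<in>S. A (Y n) i * (R i + Y n \<bullet> i))"
      proof (intro exI allI impI)
        fix n
        have "F (Y n) = (\<Sum>i\<in>S. A (Y n) i * (R i + Y n \<bullet> i)) - rate_I S U (A (Y n))"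
          using DV_anc[of "\<lambda>i. R i + Y n \<bullet> i"] by simp
        moreover have "- (\<Sum>i\<in>S. A (Y n) i * (\<Sum>j\<in>S. U i j * v j) / v i) \<le> rate_I S U (A (Y n))"
          by (rule rate_ge[OF anc_prob vp])
        ultimately show "F (Y n) \<le> (\<Sum>i\<in>S. A (Y n) i * (\<Sum>j\<in>S. U i j * v j) / v i) + (\<Sum>i\<in>S. A (Y n) i * (R i + Y n \<bullet> i))"
          by simp
      qed
    qed
  qed
  hence "\<nu> k = A \<beta> k" by simp
  hence "L k = A \<beta> k" using k unfolding \<nu>_def by simp
  hence "(\<lambda>n. A (Y n) k) \<longlonglongrightarrow> A \<beta> k" using LY[rule_format, OF k] by simp
  hence "\<forall>\<^sub>F n in sequentially. dist (A (Y n) k) (A \<beta> k) < \<epsilon>" using tendstoD \<epsilon> by auto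
  then obtain N where "\<forall>n\<ge>N. dist (A (Y n) k) (A \<beta> k) < \<epsilon>" unfolding eventually_sequentially by blast
  hence "\<bar>A (Y N) k - A \<beta> k\<bar> < \<epsilon>" by (simp add: dist_real_def)
  moreover have "r1 (r2 N) \<in> I" using r1 by auto
  ultimately show False unfolding I_def Y_def by simp
qed

lemma m_cont: "isCont m \<beta>"
proof (rule continuous_at_sequentiallyI)
  fix X assume X: "X \<longlonglongrightarrow> \<beta>"
  show "(\<lambda>n. m (X n)) \<longlonglongrightarrow> m \<beta>"
    by (intro tendsto_sum tendsto_scaleR tendsto_const A_tendsto[OF X])
qed

lemma F_deriv: "((\<lambda>\<beta>. F \<beta>) has_derivative (\<lambda>h. h \<bullet> m \<beta>)) (at \<beta>)"
  unfolding has_derivative_at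
proof
  show "bounded_linear (\<lambda>h. h \<bullet> m \<beta>)" by (rule bounded_linear_inner_left)
  show "(\<lambda>h. norm (F (\<beta> + h) - F \<beta> - h \<bullet> m \<beta>) / norm h) \<midarrow>0\<rightarrow> 0"
  proof (rule Lim_null_comparison)
    show "\<forall>\<^sub>F h in at 0. norm (norm (F (\<beta> + h) - F \<beta> - h \<bullet> m \<beta>) / norm h) \<le> norm (m (\<beta> + h) - m \<beta>)"
    proof (rule always_eventually, rule allI)
      fix h :: "real^'d"
      have lo: "0 \<le> F (\<beta> + h) - F \<beta> - h \<bullet> m \<beta>" using F_sub[of \<beta> "\<beta> + h"] by simp
      have up: "F (\<beta> + h) - F \<beta> - h \<bullet> m \<beta> \<le> h \<bullet> (m (\<beta> + h) - m \<beta>)"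
        using F_sub[of "\<beta> + h" \<beta>] by (simp add: inner_diff_right)
      also have "\<dots> \<le> norm h * norm (m (\<beta> + h) - m \<beta>)"
        using Cauchy_Schwarz_ineq2[of h "m (\<beta> + h) - m \<beta>"] by linarith
      finally have "norm (F (\<beta> + h) - F \<beta> - h \<bullet> m \<beta>) \<le> norm h * norm (m (\<beta> + h) - m \<beta>)"
        using lo by simp
      thus "norm (norm (F (\<beta> + h) - F \<beta> - h \<bullet> m \<beta>) / norm h) \<le> norm (m (\<beta> + h) - m \<beta>)"
        by (cases "h = 0") (simp_all add: divide_le_eq mult.commute)
    qed
    have "(\<lambda>h. m (\<beta> + h)) \<midarrow>0\<rightarrow> m \<beta>" using m_cont[of \<beta>] by (simp add: isCont_iff)
    hence "(\<lambda>h. m (\<beta> + h) - m \<beta>) \<midarrow>0\<rightarrow> 0" by (simp add: LIM_zero)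
    thus "(\<lambda>h. norm (m (\<beta> + h) - m \<beta>)) \<midarrow>0\<rightarrow> 0" by (simp add: tendsto_norm_zero)
  qed
qed

lemma conv_mean:
  assumes "y \<in> convex hull S"
  obtains \<nu> where "\<nu> \<in> prob_vecs S" "(\<Sum>i\<in>S. \<nu> i *\<^sub>R i) = y"
proof -
  obtain u where u: "\<forall>x\<in>S. 0 \<le> u x" "sum u S = 1" "(\<Sum>x\<in>S. u x *\<^sub>R x) = y"
    using assms convex_hull_finite[OF fin] by auto
  define \<nu> where "\<nu> = (\<lambda>i. if i \<in> S then u i else 0)"
  have "\<nu> \<in> prob_vecs S" unfolding prob_vecs_def \<nu>_def using u by auto
  moreover have "(\<Sum>i\<in>S. \<nu> i *\<^sub>R i) = y" unfolding \<nu>_def using u by simp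
  ultimately show ?thesis using that by blast
qed

lemma mean_conv: "\<nu> \<in> prob_vecs S \<Longrightarrow> (\<Sum>i\<in>S. \<nu> i *\<^sub>R i) \<in> convex hull S"
  unfolding convex_hull_finite[OF fin] prob_vecs_def by auto

lemma Lam_upper:
  assumes "\<nu> \<in> prob_vecs S" "(\<Sum>i\<in>S. \<nu> i *\<^sub>R i) = y"
  shows "(\<Sum>i\<in>S. \<nu> i * R i) - rate_I S U \<nu> \<le> bigLambda S U R y"
  unfolding bigLambda_def
proof (rule cSup_upper)
  show "(\<Sum>i\<in>S. \<nu> i * R i) - rate_I S U \<nu> \<in> {(\<Sum>i\<in>S. \<nu> i * R i) - rate_I S U \<nu> |\<nu>. \<nu> \<in> prob_vecs S \<and> (\<Sum>i\<in>S. \<nu> i *\<^sub>R i) = y}"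
    using assms by blast
  show "bdd_above {(\<Sum>i\<in>S. \<nu> i * R i) - rate_I S U \<nu> |\<nu>. \<nu> \<in> prob_vecs S \<and> (\<Sum>i\<in>S. \<nu> i *\<^sub>R i) = y}"
  proof (rule bdd_aboveI)
    fix x assume "x \<in> {(\<Sum>i\<in>S. \<nu> i * R i) - rate_I S U \<nu> |\<nu>. \<nu> \<in> prob_vecs S \<and> (\<Sum>i\<in>S. \<nu> i *\<^sub>R i) = y}"
    then obtain \<mu> where mu: "\<mu> \<in> prob_vecs S" "x = (\<Sum>i\<in>S. \<mu> i * R i) - rate_I S U \<mu>" by blast
    have "(\<Sum>i\<in>S. \<mu> i * R i) \<le> (\<Sum>i\<in>S. \<bar>R i\<bar>)"
    proof (rule sum_mono)
      fix i assume i: "i \<in> S"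
      have "0 \<le> \<mu> i" "\<mu> i \<le> 1" using prob_bounds[OF mu(1) i] by auto
      have "\<mu> i * R i \<le> \<mu> i * \<bar>R i\<bar>" using \<open>0 \<le> \<mu> i\<close> by (simp add: mult_left_mono)
      also have "\<dots> \<le> \<bar>R i\<bar>" by (rule mult_left_le_one_le) (use \<open>0 \<le> \<mu> i\<close> \<open>\<mu> i \<le> 1\<close> in auto)
      finally show "\<mu> i * R i \<le> \<bar>R i\<bar>" .
    qed
    thus "x \<le> (\<Sum>i\<in>S. \<bar>R i\<bar>)" using mu rate_nonneg[OF mu(1)] by simp
  qed
qed

lemma Lam_weak:
  assumes "y \<in> convex hull S"
  shows "bigLambda S U R y \<le> F \<beta> - \<beta> \<bullet> y"
  unfolding bigLambda_def
proof (rule cSup_least)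
  obtain \<nu> where "\<nu> \<in> prob_vecs S" "(\<Sum>i\<in>S. \<nu> i *\<^sub>R i) = y" using conv_mean[OF assms] by blast
  thus "{(\<Sum>i\<in>S. \<nu> i * R i) - rate_I S U \<nu> |\<nu>. \<nu> \<in> prob_vecs S \<and> (\<Sum>i\<in>S. \<nu> i *\<^sub>R i) = y} \<noteq> {}" by blast
  fix x assume "x \<in> {(\<Sum>i\<in>S. \<nu> i * R i) - rate_I S U \<nu> |\<nu>. \<nu> \<in> prob_vecs S \<and> (\<Sum>i\<in>S. \<nu> i *\<^sub>R i) = y}"
  then obtain \<mu> where mu: "\<mu> \<in> prob_vecs S" "(\<Sum>i\<in>S. \<mu> i *\<^sub>R i) = y" "x = (\<Sum>i\<in>S. \<mu> i * R i) - rate_I S U \<mu>" by blast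
  show "x \<le> F \<beta> - \<beta> \<bullet> y" using DVb_upper[OF mu(1), of \<beta>] mu by simp
qed

end

context mkd begin

lemma g_lower: assumes i: "i \<in> S" shows "R i + U i i + \<beta> \<bullet> i \<le> F \<beta>"
proof -
  interpret P: pf S "plus_diag U (\<lambda>i. R i + \<beta> \<bullet> i)" by (rule pfQ)
  have "plus_diag U (\<lambda>i. R i + \<beta> \<bullet> i) i i \<le> pfr S (plus_diag U (\<lambda>i. R i + \<beta> \<bullet> i))" by (rule P.diag_le[OF i])
  thus ?thesis using lam_pfr[of "\<lambda>i. R i + \<beta> \<bullet> i"] unfolding plus_diag_def by simp
qed

lemma F_deriv_g: "((\<lambda>b. F b - b \<bullet> z) has_derivative (\<lambda>h. h \<bullet> m \<beta> - h \<bullet> z)) (at \<beta>)"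
proof -
  have "((\<lambda>b. b \<bullet> z) has_derivative (\<lambda>h. h \<bullet> z)) (at \<beta>)"
    by (rule bounded_linear.has_derivative[OF bounded_linear_inner_left has_derivative_ident])
  thus ?thesis by (intro has_derivative_diff F_deriv)
qed

lemma min_zero_grad:
  assumes "\<forall>b. F \<beta> - \<beta> \<bullet> z \<le> F b - b \<bullet> z"
  shows "m \<beta> = z"
proof -
  have "(\<lambda>h. h \<bullet> m \<beta> - h \<bullet> z) = (\<lambda>h. 0)"
    by (rule differential_zero_maxmin[of \<beta> UNIV, OF _ _ F_deriv_g]) (use assms in auto)
  hence "(m \<beta> - z) \<bullet> m \<beta> - (m \<beta> - z) \<bullet> z = 0" by metis
  hence "(m \<beta> - z) \<bullet> (m \<beta> - z) = 0" by (simp add: inner_diff_right)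
  thus ?thesis by simp
qed

lemma minimizer:
  assumes z: "z \<in> rint_conv S"
  shows "\<exists>\<beta>. m \<beta> = z"
proof -
  obtain \<nu>0 where nuP: "\<nu>0 \<in> prob_vecs S" and nupos: "\<forall>i\<in>S. \<nu>0 i > 0" and zdef: "z = (\<Sum>i\<in>S. \<nu>0 i *\<^sub>R i)"
    using z unfolding rint_conv_def by blast
  define V where "V = span ((\<lambda>i. i - z) ` S)"
  define g where "g = (\<lambda>b. F b - b \<bullet> z)"
  have gd: "(g has_derivative (\<lambda>h. h \<bullet> m b - h \<bullet> z)) (at b)" for b unfolding g_def by (rule F_deriv_g)
  have gcont: "continuous_on X g" for X
    by (rule has_derivative_continuous_on) (rule has_derivative_at_withinI[OF gd])
  define C where "C = (\<Sum>i\<in>S. \<bar>R i + U i i\<bar>)"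
  have glow: "- C + b \<bullet> (i - z) \<le> g b" if i: "i \<in> S" for b i
  proof -
    have "\<bar>R i + U i i\<bar> \<le> C" unfolding C_def by (rule member_le_sum) (use i fin in auto)
    thus ?thesis using g_lower[OF i, of b] unfolding g_def by (simp add: inner_diff_right)
  qed
  define \<psi> where "\<psi> = (\<lambda>u. \<Sum>i\<in>S. max 0 (u \<bullet> (i - z)))"
  have psi_cont: "continuous_on X \<psi>" for X unfolding \<psi>_def by (intro continuous_intros)
  have psi_pos: "\<psi> u > 0" if u: "u \<in> V" "u \<noteq> 0" for u
  proof (rule ccontr)
    assume "\<not> \<psi> u > 0"
    hence "\<psi> u \<le> 0" by simp
    moreover have nn: "\<forall>i\<in>S. 0 \<le> max 0 (u \<bullet> (i - z))" by simp
    ultimately have "\<psi> u = 0" unfolding \<psi>_def using sum_nonneg[of S "\<lambda>i. max 0 (u \<bullet> (i - z))"] by simp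
    hence all0: "\<forall>i\<in>S. max 0 (u \<bullet> (i - z)) = 0" unfolding \<psi>_def
      using sum_nonneg_eq_0_iff[OF fin, of "\<lambda>i. max 0 (u \<bullet> (i - z))"] by simp
    have le0: "\<forall>i\<in>S. \<nu>0 i * (u \<bullet> (i - z)) \<le> 0"
    proof
      fix i assume i: "i \<in> S"
      have "max 0 (u \<bullet> (i - z)) = 0" using all0 i by blast
      moreover have "u \<bullet> (i - z) \<le> max 0 (u \<bullet> (i - z))" by simp
      ultimately have "u \<bullet> (i - z) \<le> 0" by simp
      thus "\<nu>0 i * (u \<bullet> (i - z)) \<le> 0" using nupos i by (simp add: mult_nonneg_nonpos less_imp_le)
    qed
    have s1: "sum \<nu>0 S = 1" using nuP unfolding prob_vecs_def by auto
    have "(\<Sum>i\<in>S. \<nu>0 i * (u \<bullet> (i - z))) = u \<bullet> (\<Sum>i\<in>S. \<nu>0 i *\<^sub>R i) - (\<Sum>i\<in>S. \<nu>0 i) * (u \<bullet> z)"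
      by (simp add: inner_diff_right inner_sum_right right_diff_distrib sum_subtractf sum_distrib_right)
    also have "\<dots> = 0" using s1 zdef by simp
    finally have sum0: "(\<Sum>i\<in>S. - (\<nu>0 i * (u \<bullet> (i - z)))) = 0" by (simp add: sum_negf)
    have all0': "\<forall>i\<in>S. - (\<nu>0 i * (u \<bullet> (i - z))) = 0"
      using sum_nonneg_eq_0_iff[OF fin, of "\<lambda>i. - (\<nu>0 i * (u \<bullet> (i - z)))"] le0 sum0 by auto
    have orth: "\<forall>i\<in>S. u \<bullet> (i - z) = 0"
    proof
      fix i assume i: "i \<in> S"
      have "\<nu>0 i * (u \<bullet> (i - z)) = 0" using all0' i by simp
      moreover have "\<nu>0 i > 0" using nupos i by auto
      ultimately show "u \<bullet> (i - z) = 0" by simp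
    qed
    have "real_inner_class.orthogonal u u"
    proof (rule orthogonal_to_span[OF u(1)[unfolded V_def]])
      fix y assume "y \<in> (\<lambda>i. i - z) ` S"
      thus "real_inner_class.orthogonal u y" using orth unfolding real_inner_class.orthogonal_def by auto
    qed
    thus False using u(2) unfolding real_inner_class.orthogonal_def by simp
  qed
  have "\<exists>\<delta>>0. \<forall>u\<in>V. \<exists>i\<in>S. \<delta> * norm u \<le> u \<bullet> (i - z)"
  proof (cases "V \<inter> sphere 0 1 = {}")
    case True
    have V0: "u = 0" if "u \<in> V" for u
    proof (rule ccontr)
      assume "u \<noteq> 0"
      hence "u /\<^sub>R norm u \<in> V \<inter> sphere 0 1" using that unfolding V_def by (auto intro: span_mul)
      thus False using True by auto
    qed
    obtain i0 where i0: "i0 \<in> S" using ne by auto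
    show ?thesis
    proof (intro exI[of _ 1] conjI ballI)
      fix u assume "u \<in> V"
      hence "u = 0" using V0 by blast
      thus "\<exists>i\<in>S. 1 * norm u \<le> u \<bullet> (i - z)" using i0 by auto
    qed simp
  next
    case False
    have cpt: "compact (V \<inter> sphere 0 1)" unfolding V_def by (intro closed_Int_compact closed_span compact_sphere)
    obtain u0 where u0: "u0 \<in> V \<inter> sphere 0 1" and u0min: "\<forall>y\<in>V \<inter> sphere 0 1. \<psi> u0 \<le> \<psi> y"
      using continuous_attains_inf[OF cpt False psi_cont] by blast
    have "u0 \<noteq> 0" using u0 by auto
    hence p0: "\<psi> u0 > 0" using psi_pos u0 by auto
    define \<delta> where "\<delta> = \<psi> u0 / real (card S)"
    have cS: "real (card S) > 0" using fin ne by (simp add: card_gt_0_iff)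
    have \<delta>: "\<delta> > 0" unfolding \<delta>_def using p0 cS by simp
    show ?thesis
    proof (intro exI[of _ \<delta>] conjI ballI)
      show "\<delta> > 0" by (rule \<delta>)
      fix u assume uV: "u \<in> V"
      show "\<exists>i\<in>S. \<delta> * norm u \<le> u \<bullet> (i - z)"
      proof (cases "u = 0")
        case True thus ?thesis using ne by auto
      next
        case False
        define w where "w = u /\<^sub>R norm u"
        have wK: "w \<in> V \<inter> sphere 0 1" using uV False unfolding w_def V_def by (auto intro: span_mul)
        have "\<psi> w \<ge> \<psi> u0" using u0min wK by auto
        have "\<exists>i\<in>S. max 0 (w \<bullet> (i - z)) \<ge> \<delta>"
        proof (rule ccontr)
          assume "\<not> (\<exists>i\<in>S. max 0 (w \<bullet> (i - z)) \<ge> \<delta>)"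
          hence lt: "\<forall>i\<in>S. max 0 (w \<bullet> (i - z)) < \<delta>" by auto
          have "\<psi> w < (\<Sum>i\<in>S. \<delta>)" unfolding \<psi>_def
            by (rule sum_strict_mono) (use fin ne lt in auto)
          also have "\<dots> = \<psi> u0" unfolding \<delta>_def using cS by simp
          finally show False using \<open>\<psi> w \<ge> \<psi> u0\<close> by simp
        qed
        then obtain i where i: "i \<in> S" "max 0 (w \<bullet> (i - z)) \<ge> \<delta>" by blast
        have "w \<bullet> (i - z) \<ge> \<delta>" using i(2) \<delta> by (simp add: le_max_iff_disj)
        hence "norm u * \<delta> \<le> norm u * (w \<bullet> (i - z))" by (simp add: mult_left_mono)
        also have "norm u * (w \<bullet> (i - z)) = u \<bullet> (i - z)" unfolding w_def using False by simp
        finally show ?thesis using i(1) by (auto simp: mult.commute)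
      qed
    qed
  qed
  then obtain \<delta> where \<delta>: "\<delta> > 0" and coer: "\<forall>u\<in>V. \<exists>i\<in>S. \<delta> * norm u \<le> u \<bullet> (i - z)" by blast
  have gcoer: "- C + \<delta> * norm u \<le> g u" if "u \<in> V" for u
  proof -
    from coer[rule_format, OF that] obtain i where i: "i \<in> S" "\<delta> * norm u \<le> u \<bullet> (i - z)" by blast
    have "- C + u \<bullet> (i - z) \<le> g u" by (rule glow[OF i(1)])
    thus ?thesis using i(2) by linarith
  qed
  have g0: "- C \<le> g 0" using gcoer[of 0] unfolding V_def by (simp add: span_zero)
  define r where "r = (g 0 + C) / \<delta> + 1"
  have "(g 0 + C) / \<delta> \<ge> 0" using g0 \<delta> by simp
  hence r0: "r > 0" unfolding r_def by linarith
  have dr: "\<delta> * r = g 0 + C + \<delta>" unfolding r_def using \<delta> by (simp add: field_simps)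
  define K where "K = V \<inter> cball 0 r"
  have Kc: "compact K" unfolding K_def V_def by (intro closed_Int_compact closed_span compact_cball)
  have "0 \<in> K" unfolding K_def V_def using r0 by (auto intro: span_zero)
  hence Kne: "K \<noteq> {}" by auto
  obtain b where bK: "b \<in> K" and bmin: "\<forall>y\<in>K. g b \<le> g y"
    using continuous_attains_inf[OF Kc Kne gcont] by blast
  have bV: "b \<in> V" using bK unfolding K_def by auto
  have bmin': "g b \<le> g u" if "u \<in> V" for u
  proof (cases "norm u \<le> r")
    case True thus ?thesis using bmin that unfolding K_def by auto
  next
    case False
    have "0 \<in> K" unfolding K_def V_def using r0 by (auto intro: span_zero)
    hence "g b \<le> g 0" using bmin by auto
    also have "g 0 < - C + \<delta> * r" using dr \<delta> by linarith
    also have "\<dots> \<le> - C + \<delta> * norm u" using False \<delta> by simp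
    also have "\<dots> \<le> g u" by (rule gcoer[OF that])
    finally show ?thesis by simp
  qed
  define w where "w = m b - z"
  have wV: "w \<in> V"
  proof -
    have sA: "sum (A b) S = 1" using anc_prob unfolding prob_vecs_def by auto
    have "w = (\<Sum>i\<in>S. A b i *\<^sub>R (i - z))"
      unfolding w_def using sA by (simp add: scaleR_diff_right sum_subtractf scaleR_sum_left[symmetric])
    also have "\<dots> \<in> V" unfolding V_def by (intro span_sum span_mul span_base) auto
    finally show ?thesis .
  qed
  define \<phi> where "\<phi> = (\<lambda>t::real. b + t *\<^sub>R w)"
  have \<phi>d: "(\<phi> has_derivative (\<lambda>t. t *\<^sub>R w)) (at 0)"
    unfolding \<phi>_def by (intro derivative_eq_intros) auto
  have gd0: "(g has_derivative (\<lambda>h. h \<bullet> m b - h \<bullet> z)) (at (\<phi> 0))" unfolding \<phi>_def using gd by simp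
  have ch: "((g \<circ> \<phi>) has_derivative ((\<lambda>h. h \<bullet> m b - h \<bullet> z) \<circ> (\<lambda>t. t *\<^sub>R w))) (at 0)"
    by (rule diff_chain_at[OF \<phi>d gd0])
  have "(\<lambda>h. h \<bullet> m b - h \<bullet> z) \<circ> (\<lambda>t. t *\<^sub>R w) = (\<lambda>v. 0)"
  proof (rule differential_zero_maxmin[of 0 UNIV, OF _ _ ch])
    show "(\<forall>y\<in>UNIV. (g \<circ> \<phi>) y \<le> (g \<circ> \<phi>) 0) \<or> (\<forall>y\<in>UNIV. (g \<circ> \<phi>) 0 \<le> (g \<circ> \<phi>) y)"
    proof (rule disjI2, rule ballI)
      fix t :: real
      have "\<phi> t \<in> V" unfolding \<phi>_def using bV wV unfolding V_def by (intro span_add span_mul)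
      thus "(g \<circ> \<phi>) 0 \<le> (g \<circ> \<phi>) t" using bmin' unfolding \<phi>_def by simp
    qed
  qed auto
  hence "((\<lambda>h. h \<bullet> m b - h \<bullet> z) \<circ> (\<lambda>t. t *\<^sub>R w)) 1 = 0" by simp
  hence "w \<bullet> w = 0" unfolding w_def by (simp add: inner_diff_right)
  hence "w = 0" by simp
  thus ?thesis unfolding w_def by auto
qed

end

theorem proposition3:
  fixes S :: "(real^'d) set" and U :: "real^'d \<Rightarrow> real^'d \<Rightarrow> real"
    and R :: "real^'d \<Rightarrow> real" and z :: "real^'d"
  assumes "finite S" and "markov_generator S U" and "irreducible_gen S U"
    and "z \<in> rint_conv S"
  shows "(\<exists>\<beta>. tangent_slope S U R z \<beta>)
    \<and> (\<forall>\<beta>1 \<beta>2. tangent_slope S U R z \<beta>1 \<longrightarrow> tangent_slope S U R z \<beta>2 \<longrightarrow>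
         ancestral S U (\<lambda>i. R i + \<beta>1 \<bullet> i) = ancestral S U (\<lambda>i. R i + \<beta>2 \<bullet> i))
    \<and> (\<forall>\<beta>z. tangent_slope S U R z \<beta>z \<longrightarrow>
         (let \<alpha> = ancestral S U (\<lambda>i. R i + \<beta>z \<bullet> i) in
           bigLambda S U R z = (INF \<beta>. lam S U (\<lambda>i. R i + \<beta> \<bullet> i) - \<beta> \<bullet> z)
         \<and> bigLambda S U R z = lam S U (\<lambda>i. R i + \<beta>z \<bullet> i) - \<beta>z \<bullet> z
         \<and> bigLambda S U R z = (\<Sum>i\<in>S. \<alpha> i * R i) - rate_I S U \<alpha>
         \<and> ((\<lambda>\<beta>. lam S U (\<lambda>i. R i + \<beta> \<bullet> i)) has_derivative (\<lambda>h. h \<bullet> (\<Sum>i\<in>S. \<alpha> i *\<^sub>R i))) (at \<beta>z)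
         \<and> (\<Sum>i\<in>S. \<alpha> i *\<^sub>R i) = z))
    \<and> (\<forall>\<beta>. (\<lambda>b. lam S U (\<lambda>i. R i + b \<bullet> i)) differentiable (at \<beta>))"
proof -
  note fin = assms(1) and zr = assms(4)
  obtain \<nu>0 where nuP: "\<nu>0 \<in> prob_vecs S" and zdef: "z = (\<Sum>i\<in>S. \<nu>0 i *\<^sub>R i)"
    using zr unfolding rint_conv_def by blast
  have ne: "S \<noteq> {}"
  proof
    assume "S = {}"
    hence "sum \<nu>0 S = 0" by simp
    thus False using nuP unfolding prob_vecs_def by simp
  qed
  interpret M: mkd S U R by unfold_locales (use assms ne in auto)
  define Lz where "Lz = bigLambda S U R z"
  have zconv: "z \<in> convex hull S" using M.mean_conv[OF nuP] zdef by simp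
  have W: "Lz \<le> M.F b - b \<bullet> z" for b unfolding Lz_def by (rule M.Lam_weak[OF zconv])
  have tang: "M.F b - b \<bullet> z = Lz \<and> M.m b = z \<and> Lz = (\<Sum>i\<in>S. M.A b i * R i) - rate_I S U (M.A b)"
    if t: "tangent_slope S U R z b" for b
  proof -
    have mconv: "M.m b \<in> convex hull S" by (rule M.mean_conv[OF M.anc_prob])
    have "M.F b = (\<Sum>i\<in>S. M.A b i * R i) + b \<bullet> M.m b - rate_I S U (M.A b)" using M.DVb[of b] by simp
    moreover have "(\<Sum>i\<in>S. M.A b i * R i) - rate_I S U (M.A b) \<le> bigLambda S U R (M.m b)"
      by (rule M.Lam_upper[OF M.anc_prob refl])
    moreover have "bigLambda S U R (M.m b) \<le> Lz - b \<bullet> (M.m b - z)"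
      using t mconv unfolding tangent_slope_def Lz_def by blast
    ultimately have le: "M.F b - b \<bullet> z \<le> Lz" by (simp add: inner_diff_right)
    hence eq: "M.F b - b \<bullet> z = Lz" using W[of b] by simp
    have mz: "M.m b = z" by (rule M.min_zero_grad) (use eq W in auto)
    have "Lz = (\<Sum>i\<in>S. M.A b i * R i) - rate_I S U (M.A b)"
      using eq M.DVb[of b] mz by simp
    thus ?thesis using eq mz by simp
  qed
  obtain bs where bs: "M.m bs = z" using M.minimizer[OF zr] by blast
  have ex: "tangent_slope S U R z bs"
    unfolding tangent_slope_def
  proof
    fix y assume y: "y \<in> convex hull S"
    have "bigLambda S U R y \<le> M.F bs - bs \<bullet> y" by (rule M.Lam_weak[OF y])
    moreover have "M.F bs = (\<Sum>i\<in>S. M.A bs i * R i) + bs \<bullet> z - rate_I S U (M.A bs)"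
      using M.DVb[of bs] bs by simp
    moreover have "(\<Sum>i\<in>S. M.A bs i * R i) - rate_I S U (M.A bs) \<le> Lz"
      unfolding Lz_def by (rule M.Lam_upper[OF M.anc_prob bs])
    ultimately show "bigLambda S U R y \<le> bigLambda S U R z - bs \<bullet> (y - z)"
      unfolding Lz_def by (simp add: inner_diff_right)
  qed
  have anc_eq: "M.A b2 = M.A b1" if t1: "tangent_slope S U R z b1" and t2: "tangent_slope S U R z b2" for b1 b2
  proof (rule M.max_char[OF M.anc_prob])
    have "(\<Sum>i\<in>S. M.A b2 i * (R i + b1 \<bullet> i)) = (\<Sum>i\<in>S. M.A b2 i * R i) + b1 \<bullet> M.m b2"
      by (rule M.sumQ)
    moreover have "M.m b2 = z" "Lz = (\<Sum>i\<in>S. M.A b2 i * R i) - rate_I S U (M.A b2)" using tang[OF t2] by auto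
    moreover have "M.F b1 - b1 \<bullet> z = Lz" using tang[OF t1] by auto
    ultimately show "M.F b1 \<le> (\<Sum>i\<in>S. M.A b2 i * (R i + b1 \<bullet> i)) - rate_I S U (M.A b2)" by simp
  qed
  show ?thesis
  proof (intro conjI allI impI)
    show "\<exists>\<beta>. tangent_slope S U R z \<beta>" using ex by blast
  next
    fix b1 b2 assume "tangent_slope S U R z b1" "tangent_slope S U R z b2"
    thus "M.A b1 = M.A b2" by (intro anc_eq[of b2 b1])
  next
    fix b assume t: "tangent_slope S U R z b"
    note tb = tang[OF t]
    have inf: "(INF \<beta>. M.F \<beta> - \<beta> \<bullet> z) = Lz"
    proof (rule cInf_eq_minimum)
      show "Lz \<in> range (\<lambda>\<beta>. M.F \<beta> - \<beta> \<bullet> z)" by (rule range_eqI[of _ _ b]) (use tb in simp)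
      fix x assume "x \<in> range (\<lambda>\<beta>. M.F \<beta> - \<beta> \<bullet> z)"
      thus "Lz \<le> x" using W by auto
    qed
    show "let \<alpha> = M.A b in
           bigLambda S U R z = (INF \<beta>. M.F \<beta> - \<beta> \<bullet> z)
         \<and> bigLambda S U R z = M.F b - b \<bullet> z
         \<and> bigLambda S U R z = (\<Sum>i\<in>S. \<alpha> i * R i) - rate_I S U \<alpha>
         \<and> ((\<lambda>\<beta>. M.F \<beta>) has_derivative (\<lambda>h. h \<bullet> (\<Sum>i\<in>S. \<alpha> i *\<^sub>R i))) (at b)
         \<and> (\<Sum>i\<in>S. \<alpha> i *\<^sub>R i) = z"
      unfolding Let_def
    proof (intro conjI)
      show "bigLambda S U R z = (INF \<beta>. M.F \<beta> - \<beta> \<bullet> z)" using inf unfolding Lz_def by simp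
      show "bigLambda S U R z = M.F b - b \<bullet> z" using tb unfolding Lz_def by simp
      show "bigLambda S U R z = (\<Sum>i\<in>S. M.A b i * R i) - rate_I S U (M.A b)" using tb unfolding Lz_def by simp
      show "((\<lambda>\<beta>. M.F \<beta>) has_derivative (\<lambda>h. h \<bullet> M.m b)) (at b)" by (rule M.F_deriv)
      show "M.m b = z" using tb by simp
    qed
  next
    fix b
    show "(\<lambda>b. M.F b) differentiable (at b)" using M.F_deriv[of b] by (rule differentiableI)
  qed
qed

end
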